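(* Let $M\subseteq N$ be models of $\mathrm{AA}_0$ such that $N$ is a cofinal extension of $M$ and $M\preccurlyeq_{\Sigma_0}N$. If $M$ and $N$ satisfy the collection axioms, then $M\preccurlyeq N$.
   Context: Structures are complete metric spaces of diameter at most $1$ in $L=\{+,\cdot,\wedge,\vee,0,1\}$ (operations $1$-Lipschitz, $d$ the only relation symbol); affine formulas are built from $1$ and $d(t_1,t_2)$ using $+$, real scalar multiples, $\sup$, $\inf$. $|x|=d(x,0)$; $x\le y$ means $x\wedge y=x$; $nx$, $x^n$ iterated sum/product. $\mathrm{AA}_0$ consists of (universally quantified): (A1) the identities of the nonnegative part of a lattice-ordered commutative ring with identity (commutative semiring axioms, lattice axioms, distributivity of $+,\cdot$ over $\wedge,\vee$, $0\le x$); (A2) $\inf_y d(x,(x\wedge y)+1)=1-|x|$ and $x\le x^2$; (A3) $d(x+z,y+z)=d(x,y)$; (A4) $d(y,z)\le d(xy,xz)+1-|x|$; (A5) $d(xy,xz)=d(x^ny,x^nz)\le d(y,z)$; (A6) $d(nx,ny)=d(x^n,y^n)=d(x,y)$, $n\ge1$; (A7) $|x\wedge y|+|x\vee y|=|x|+|y|$; (A8) $|xy+z|=|(x\wedge y)+z|$; (A9) $|x+y+z|=|(x\vee y)+z|$; (A10) $\inf_t d((x\wedge y)+t,y)=0$. Bounded quantifiers: $\sup_{x\le t}\phi(x):=\sup_x\phi(x\wedge t)$, $\inf_{x\le t}\phi(x):=\inf_x\phi(x\wedge t)$ ($t$ a term without $x$); $\Sigma_0$ formulas are affine formulas with only bounded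 quantifiers. $M\preccurlyeq_{\Sigma_0}N$ means $\phi^M(\bar a)=\phi^N(\bar a)$ for all $\Sigma_0$ formulas $\phi$ and $\bar a\in M$; $M\preccurlyeq N$ means this for all affine formulas. $N$ is a cofinal extension of $M$ if $M\subseteq N$ is a substructure and every $x\in N$ satisfies $x\le y$ for some $y\in M$. The collection axioms are, for every affine formula $\phi(x,\bar y,\bar z)$, the universal closures of $\inf_{x\le t}\sup_{\bar y}\phi(x,\bar y,\bar z)=\sup_s\inf_{x\le t}\sup_{\bar y\le s}\phi(x,\bar y,\bar z)$. *)

theory Defs
  imports Main "HOL-Library.FuncSet" Complex_Main
begin

record 'a lstr =
  carrier :: "'a set"
  dst :: "'a \<Rightarrow> 'a \<Rightarrow> real"
  pl  :: "'a \<Rightarrow> 'a \<Rightarrow> 'a"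
  tms :: "'a \<Rightarrow> 'a \<Rightarrow> 'a"
  mt  :: "'a \<Rightarrow> 'a \<Rightarrow> 'a"
  jn  :: "'a \<Rightarrow> 'a \<Rightarrow> 'a"
  zr  :: 'a
  on  :: 'a

definition metric_lstr :: "'a lstr \<Rightarrow> bool" where
  "metric_lstr S \<longleftrightarrow>
     zr S \<in> carrier S \<and> on S \<in> carrier S \<and>
     (\<forall>x\<in>carrier S. \<forall>y\<in>carrier S.
        pl S x y \<in> carrier S \<and> tms S x y \<in> carrier S \<and>
        mt S x y \<in> carrier S \<and> jn S x y \<in> carrier S) \<and>
     (\<forall>x\<in>carrier S. \<forall>y\<in>carrier S.
        0 \<le> dst S x y \<and> dst S x y \<le> 1 \<and> (dst S x y = 0 \<longleftrightarrow> x = y) \<and>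
        dst S x y = dst S y x) \<and>
     (\<forall>x\<in>carrier S. \<forall>y\<in>carrier S. \<forall>z\<in>carrier S. dst S x z \<le> dst S x y + dst S y z) \<and>
     (\<forall>f. range f \<subseteq> carrier S \<longrightarrow>
          (\<forall>e::real>0. \<exists>K::nat. \<forall>m\<ge>K. \<forall>n\<ge>K. dst S (f m) (f n) < e) \<longrightarrow>
          (\<exists>l\<in>carrier S. \<forall>e::real>0. \<exists>K::nat. \<forall>n\<ge>K. dst S (f n) l < e)) \<and>
     (\<forall>op\<in>{pl S, tms S, mt S, jn S}. \<forall>x\<in>carrier S. \<forall>x'\<in>carrier S. \<forall>y\<in>carrier S.
        dst S (op x y) (op x' y) \<le> dst S x x' \<and> dst S (op y x) (op y x') \<le> dst S x x')"

definition leq :: "'a lstr \<Rightarrow> 'a \<Rightarrow> 'a \<Rightarrow> bool" where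
  "leq S x y \<longleftrightarrow> mt S x y = x"

definition nrm :: "'a lstr \<Rightarrow> 'a \<Rightarrow> real" where
  "nrm S x = dst S x (zr S)"

fun nsum :: "'a lstr \<Rightarrow> nat \<Rightarrow> 'a \<Rightarrow> 'a" where
  "nsum S 0 x = zr S"
| "nsum S (Suc n) x = pl S x (nsum S n x)"

fun npow :: "'a lstr \<Rightarrow> 'a \<Rightarrow> nat \<Rightarrow> 'a" where
  "npow S x 0 = on S"
| "npow S x (Suc n) = tms S x (npow S x n)"

definition AA0 :: "'a lstr \<Rightarrow> bool" where
  "AA0 S \<longleftrightarrow> (let C = carrier S; d = dst S; p = pl S; m = tms S; a = mt S; j = jn S;
                   z = zr S; u = on S in
    \<comment> \<open>(A1) commutative semiring\<close>
    (\<forall>x\<in>C. \<forall>y\<in>C. \<forall>w\<in>C.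
       p (p x y) w = p x (p y w) \<and> p x y = p y x \<and> p x z = x \<and>
       m (m x y) w = m x (m y w) \<and> m x y = m y x \<and> m x u = x \<and>
       m x (p y w) = p (m x y) (m x w) \<and> m z x = z) \<and>
    \<comment> \<open>(A1) lattice\<close>
    (\<forall>x\<in>C. \<forall>y\<in>C. \<forall>w\<in>C.
       a (a x y) w = a x (a y w) \<and> a x y = a y x \<and> a x x = x \<and>
       j (j x y) w = j x (j y w) \<and> j x y = j y x \<and> j x x = x \<and>
       a x (j x y) = x \<and> j x (a x y) = x) \<and>
    \<comment> \<open>(A1) distributivity of + and * over meet and join, and 0 \<le> x\<close>
    (\<forall>x\<in>C. \<forall>y\<in>C. \<forall>w\<in>C.
       p x (a y w) = a (p x y) (p x w) \<and> p x (j y w) = j (p x y) (p x w) \<and>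
       m x (a y w) = a (m x y) (m x w) \<and> m x (j y w) = j (m x y) (m x w)) \<and>
    (\<forall>x\<in>C. leq S z x) \<and>
    \<comment> \<open>(A2)\<close>
    (\<forall>x\<in>C. (INF y\<in>C. d x (p (a x y) u)) = 1 - nrm S x \<and> leq S x (m x x)) \<and>
    \<comment> \<open>(A3)\<close>
    (\<forall>x\<in>C. \<forall>y\<in>C. \<forall>w\<in>C. d (p x w) (p y w) = d x y) \<and>
    \<comment> \<open>(A4)\<close>
    (\<forall>x\<in>C. \<forall>y\<in>C. \<forall>w\<in>C. d y w \<le> d (m x y) (m x w) + 1 - nrm S x) \<and>
    \<comment> \<open>(A5)\<close>
    (\<forall>n\<ge>1. \<forall>x\<in>C. \<forall>y\<in>C. \<forall>w\<in>C.
       d (m x y) (m x w) = d (m (npow S x n) y) (m (npow S x n) w) \<and> d (m x y) (m x w) \<le> d y w) \<and>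
    \<comment> \<open>(A6)\<close>
    (\<forall>n\<ge>1. \<forall>x\<in>C. \<forall>y\<in>C.
       d (nsum S n x) (nsum S n y) = d x y \<and> d (npow S x n) (npow S y n) = d x y) \<and>
    \<comment> \<open>(A7)\<close>
    (\<forall>x\<in>C. \<forall>y\<in>C. nrm S (a x y) + nrm S (j x y) = nrm S x + nrm S y) \<and>
    \<comment> \<open>(A8)\<close>
    (\<forall>x\<in>C. \<forall>y\<in>C. \<forall>w\<in>C. nrm S (p (m x y) w) = nrm S (p (a x y) w)) \<and>
    \<comment> \<open>(A9)\<close>
    (\<forall>x\<in>C. \<forall>y\<in>C. \<forall>w\<in>C. nrm S (p (p x y) w) = nrm S (p (j x y) w)) \<and>
    \<comment> \<open>(A10)\<close>
    (\<forall>x\<in>C. \<forall>y\<in>C. (INF t\<in>C. d (p (a x y) t) y) = 0))"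

definition model_AA0 :: "'a lstr \<Rightarrow> bool" where
  "model_AA0 S \<longleftrightarrow> metric_lstr S \<and> AA0 S"

datatype trm = Var nat | TZero | TOne | TPlus trm trm | TTimes trm trm
  | TMeet trm trm | TJoin trm trm

fun tvars :: "trm \<Rightarrow> nat set" where
  "tvars (Var n) = {n}"
| "tvars TZero = {}"
| "tvars TOne = {}"
| "tvars (TPlus s t) = tvars s \<union> tvars t"
| "tvars (TTimes s t) = tvars s \<union> tvars t"
| "tvars (TMeet s t) = tvars s \<union> tvars t"
| "tvars (TJoin s t) = tvars s \<union> tvars t"

fun teval :: "'a lstr \<Rightarrow> (nat \<Rightarrow> 'a) \<Rightarrow> trm \<Rightarrow> 'a" where
  "teval S \<sigma> (Var n) = \<sigma> n"
| "teval S \<sigma> TZero = zr S"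
| "teval S \<sigma> TOne = on S"
| "teval S \<sigma> (TPlus s t) = pl S (teval S \<sigma> s) (teval S \<sigma> t)"
| "teval S \<sigma> (TTimes s t) = tms S (teval S \<sigma> s) (teval S \<sigma> t)"
| "teval S \<sigma> (TMeet s t) = mt S (teval S \<sigma> s) (teval S \<sigma> t)"
| "teval S \<sigma> (TJoin s t) = jn S (teval S \<sigma> s) (teval S \<sigma> t)"

text \<open>The bounded quantifiers sup_{x \<le> t} phi := sup_x phi(x meet t) (and inf) are included as
  constructors FBSup/FBInf with exactly this semantics (they are abbreviations).\<close>

datatype fm = FOne | FDist trm trm | FAdd fm fm | FScal real fm
  | FSup nat fm | FInf nat fm | FBSup nat trm fm | FBInf nat trm fm

fun fv :: "fm \<Rightarrow> nat set" where
  "fv FOne = {}"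
| "fv (FDist s t) = tvars s \<union> tvars t"
| "fv (FAdd f g) = fv f \<union> fv g"
| "fv (FScal r f) = fv f"
| "fv (FSup x f) = fv f - {x}"
| "fv (FInf x f) = fv f - {x}"
| "fv (FBSup x t f) = tvars t \<union> (fv f - {x})"
| "fv (FBInf x t f) = tvars t \<union> (fv f - {x})"

fun feval :: "'a lstr \<Rightarrow> (nat \<Rightarrow> 'a) \<Rightarrow> fm \<Rightarrow> real" where
  "feval S \<sigma> FOne = 1"
| "feval S \<sigma> (FDist s t) = dst S (teval S \<sigma> s) (teval S \<sigma> t)"
| "feval S \<sigma> (FAdd f g) = feval S \<sigma> f + feval S \<sigma> g"
| "feval S \<sigma> (FScal r f) = r * feval S \<sigma> f"
| "feval S \<sigma> (FSup x f) = (SUP a\<in>carrier S. feval S (\<sigma>(x := a)) f)"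
| "feval S \<sigma> (FInf x f) = (INF a\<in>carrier S. feval S (\<sigma>(x := a)) f)"
| "feval S \<sigma> (FBSup x t f) =
     (SUP a\<in>carrier S. feval S (\<sigma>(x := mt S a (teval S \<sigma> t))) f)"
| "feval S \<sigma> (FBInf x t f) =
     (INF a\<in>carrier S. feval S (\<sigma>(x := mt S a (teval S \<sigma> t))) f)"

fun sigma0 :: "fm \<Rightarrow> bool" where
  "sigma0 FOne = True"
| "sigma0 (FDist s t) = True"
| "sigma0 (FAdd f g) = (sigma0 f \<and> sigma0 g)"
| "sigma0 (FScal r f) = sigma0 f"
| "sigma0 (FSup x f) = False"
| "sigma0 (FInf x f) = False"
| "sigma0 (FBSup x t f) = (x \<notin> tvars t \<and> sigma0 f)"
| "sigma0 (FBInf x t f) = (x \<notin> tvars t \<and> sigma0 f)"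

definition substructure :: "'a lstr \<Rightarrow> 'a lstr \<Rightarrow> bool" where
  "substructure M N \<longleftrightarrow> carrier M \<subseteq> carrier N \<and> zr M = zr N \<and> on M = on N \<and>
     (\<forall>x\<in>carrier M. \<forall>y\<in>carrier M.
        dst M x y = dst N x y \<and> pl M x y = pl N x y \<and> tms M x y = tms N x y \<and>
        mt M x y = mt N x y \<and> jn M x y = jn N x y)"

definition cofinal_ext :: "'a lstr \<Rightarrow> 'a lstr \<Rightarrow> bool" where
  "cofinal_ext M N \<longleftrightarrow> substructure M N \<and> (\<forall>x\<in>carrier N. \<exists>y\<in>carrier M. leq N x y)"

definition sigma0_elem :: "'a lstr \<Rightarrow> 'a lstr \<Rightarrow> bool" where
  "sigma0_elem M N \<longleftrightarrow>
     (\<forall>\<phi> \<sigma>. sigma0 \<phi> \<longrightarrow> range \<sigma> \<subseteq> carrier M \<longrightarrow> feval M \<sigma> \<phi> = feval N \<sigma> \<phi>)"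

definition elem :: "'a lstr \<Rightarrow> 'a lstr \<Rightarrow> bool" where
  "elem M N \<longleftrightarrow> (\<forall>\<phi> \<sigma>. range \<sigma> \<subseteq> carrier M \<longrightarrow> feval M \<sigma> \<phi> = feval N \<sigma> \<phi>)"

definition sups :: "nat list \<Rightarrow> fm \<Rightarrow> fm" where
  "sups ys \<phi> = foldr FSup ys \<phi>"

definition bsups :: "nat list \<Rightarrow> nat \<Rightarrow> fm \<Rightarrow> fm" where
  "bsups ys s \<phi> = foldr (\<lambda>y. FBSup y (Var s)) ys \<phi>"

text \<open>inf_{x \<le> t} sup_ys phi = sup_s inf_{x \<le> t} sup_{ys \<le> s} phi, universally closed
  (t, s fresh variables).\<close>
definition collection :: "'a lstr \<Rightarrow> bool" where
  "collection S \<longleftrightarrow>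
     (\<forall>\<phi> x ys t s \<sigma>.
        x \<notin> set ys \<and> t \<noteq> x \<and> t \<notin> set ys \<and> t \<notin> fv \<phi> \<and>
        s \<noteq> x \<and> s \<noteq> t \<and> s \<notin> set ys \<and> s \<notin> fv \<phi> \<and>
        range \<sigma> \<subseteq> carrier S \<longrightarrow>
        feval S \<sigma> (FBInf x (Var t) (sups ys \<phi>)) =
        feval S \<sigma> (FSup s (FBInf x (Var t) (bsups ys s \<phi>))))"

end

theory Submission
  imports Defs
begin

lemma ml:
  assumes "metric_lstr K"
  shows "zr K \<in> carrier K" "on K \<in> carrier K"
    "\<And>x y. x \<in> carrier K \<Longrightarrow> y \<in> carrier K \<Longrightarrow> mt K x y \<in> carrier K"
    "\<And>x y. x \<in> carrier K \<Longrightarrow> y \<in> carrier K \<Longrightarrow> pl K x y \<in> carrier K"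
    "\<And>x y. x \<in> carrier K \<Longrightarrow> y \<in> carrier K \<Longrightarrow> tms K x y \<in> carrier K"
    "\<And>x y. x \<in> carrier K \<Longrightarrow> y \<in> carrier K \<Longrightarrow> jn K x y \<in> carrier K"
    "\<And>x y. x \<in> carrier K \<Longrightarrow> y \<in> carrier K \<Longrightarrow> 0 \<le> dst K x y"
    "\<And>x y. x \<in> carrier K \<Longrightarrow> y \<in> carrier K \<Longrightarrow> dst K x y \<le> 1"
  using assms unfolding metric_lstr_def by blast+

lemma aa:
  assumes "AA0 K" "x \<in> carrier K" "y \<in> carrier K" "z \<in> carrier K"
  shows "mt K (mt K x y) z = mt K x (mt K y z)" "mt K x y = mt K y x" "mt K x x = x"
proof -
  have L: "\<forall>x\<in>carrier K. \<forall>y\<in>carrier K. \<forall>w\<in>carrier K.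
       mt K (mt K x y) w = mt K x (mt K y w) \<and> mt K x y = mt K y x \<and> mt K x x = x"
    using assms(1) unfolding AA0_def Let_def by (drule_tac conjunct2, drule_tac conjunct1) (intro ballI; simp)
  show "mt K (mt K x y) z = mt K x (mt K y z)" "mt K x y = mt K y x" "mt K x x = x"
    using L assms(2-4) by blast+
qed

lemma teval_in: "metric_lstr K \<Longrightarrow> range \<sigma> \<subseteq> carrier K \<Longrightarrow> teval K \<sigma> t \<in> carrier K"
  by (induction t) (auto simp: ml)

lemma asg_upd: "range \<sigma> \<subseteq> carrier K \<Longrightarrow> a \<in> carrier K \<Longrightarrow> range (\<sigma>(x:=a)) \<subseteq> carrier K"
  by auto

lemma teval_cong: "(\<forall>v\<in>tvars t. \<sigma> v = \<tau> v) \<Longrightarrow> teval K \<sigma> t = teval K \<tau> t"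
  by (induction t) auto

lemma feval_cong: "(\<forall>v\<in>fv \<phi>. \<sigma> v = \<tau> v) \<Longrightarrow> feval K \<sigma> \<phi> = feval K \<tau> \<phi>"
proof (induction \<phi> arbitrary: \<sigma> \<tau>)
  case (FDist s t) then show ?case using teval_cong[of s \<sigma> \<tau>] teval_cong[of t \<sigma> \<tau>] by simp
next
  case (FSup x f) then show ?case by (auto intro!: SUP_cong)
next
  case (FInf x f) then show ?case by (auto intro!: INF_cong)
next
  case (FBSup x t f)
  have "teval K \<sigma> t = teval K \<tau> t" using FBSup.prems by (intro teval_cong) auto
  then show ?case using FBSup by (auto intro!: SUP_cong)
next
  case (FBInf x t f)
  have "teval K \<sigma> t = teval K \<tau> t" using FBInf.prems by (intro teval_cong) auto
  then show ?case using FBInf by (auto intro!: INF_cong)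
next
  case (FAdd f g)
  have "feval K \<sigma> f = feval K \<tau> f" using FAdd.prems by (intro FAdd.IH(1)) auto
  moreover have "feval K \<sigma> g = feval K \<tau> g" using FAdd.prems by (intro FAdd.IH(2)) auto
  ultimately show ?case by simp
qed auto

lemma feval_irr: "v \<notin> fv \<phi> \<Longrightarrow> feval K (\<sigma>(v:=a)) \<phi> = feval K \<sigma> \<phi>"
  by (rule feval_cong) auto

lemma teval_irr: "v \<notin> tvars t \<Longrightarrow> teval K (\<sigma>(v:=a)) t = teval K \<sigma> t"
  by (rule teval_cong) auto

lemma tvars_fin: "finite (tvars t)" by (induction t) auto
lemma fv_fin: "finite (fv \<phi>)" by (induction \<phi>) (auto simp: tvars_fin)

fun fb :: "fm \<Rightarrow> real" where
  "fb FOne = 1"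
| "fb (FDist s t) = 1"
| "fb (FAdd f g) = fb f + fb g"
| "fb (FScal r f) = \<bar>r\<bar> * fb f"
| "fb (FSup x f) = fb f"
| "fb (FInf x f) = fb f"
| "fb (FBSup x t f) = fb f"
| "fb (FBInf x t f) = fb f"

lemma abs_SUP_le: fixes f :: "'b \<Rightarrow> real"
  assumes "A \<noteq> {}" "\<And>a. a \<in> A \<Longrightarrow> \<bar>f a\<bar> \<le> B" shows "\<bar>SUP a\<in>A. f a\<bar> \<le> B"
proof -
  have bdd: "bdd_above (f ` A)" using assms(2) by (intro bdd_aboveI[of _ B]) (auto simp: abs_le_iff)
  obtain a where a: "a \<in> A" using assms by auto
  have "(SUP a\<in>A. f a) \<le> B" using assms by (intro cSUP_least) (auto simp: abs_le_iff)
  moreover have "f a \<le> (SUP a\<in>A. f a)" by (rule cSUP_upper[OF a bdd])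
  moreover have "-B \<le> f a" using assms(2)[OF a] by auto
  ultimately show ?thesis by auto
qed

lemma abs_INF_le: fixes f :: "'b \<Rightarrow> real"
  assumes "A \<noteq> {}" "\<And>a. a \<in> A \<Longrightarrow> \<bar>f a\<bar> \<le> B" shows "\<bar>INF a\<in>A. f a\<bar> \<le> B"
proof -
  have bdd: "bdd_below (f ` A)" using assms(2) by (intro bdd_belowI[of _ "-B"]) (force simp: abs_le_iff)
  obtain a where a: "a \<in> A" using assms by auto
  have "B \<le> B" by simp
  have "-B \<le> (INF a\<in>A. f a)"
  proof (rule cINF_greatest[OF assms(1)])
    fix a assume "a \<in> A" then show "-B \<le> f a" using assms(2)[of a] by auto
  qed
  moreover have "(INF a\<in>A. f a) \<le> f a" by (rule cINF_lower[OF bdd a])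
  moreover have "f a \<le> B" using assms(2)[OF a] by auto
  ultimately show ?thesis by auto
qed

lemma feval_bnd: "metric_lstr K \<Longrightarrow> range \<sigma> \<subseteq> carrier K \<Longrightarrow> \<bar>feval K \<sigma> \<phi>\<bar> \<le> fb \<phi>"
proof (induction \<phi> arbitrary: \<sigma>)
  case (FDist s t)
  then show ?case using ml(7,8)[OF FDist(1) teval_in teval_in, of \<sigma> \<sigma> s t] by auto
next
  case (FAdd f g) then show ?case
    by (smt (verit, best) feval.simps(3) fb.simps(3))
next
  case (FScal r f) then show ?case by (simp add: abs_mult mult_left_mono)
next
  case (FSup x f) then show ?case using ml(1)[OF FSup(2)]
    by (simp, intro abs_SUP_le) (auto intro!: FSup.IH asg_upd)
next
  case (FInf x f) then show ?case using ml(1)[OF FInf(2)]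
    by (simp, intro abs_INF_le) (auto intro!: FInf.IH asg_upd)
next
  case (FBSup x t f) then show ?case using ml(1)[OF FBSup(2)] ml(3)[OF FBSup(2)] teval_in[OF FBSup(2,3)]
    by (simp, intro abs_SUP_le) (auto intro!: FBSup.IH asg_upd)
next
  case (FBInf x t f) then show ?case using ml(1)[OF FBInf(2)] ml(3)[OF FBInf(2)] teval_in[OF FBInf(2,3)]
    by (simp, intro abs_INF_le) (auto intro!: FBInf.IH asg_upd)
qed auto

lemma INF_dual: "(INF a\<in>A. g a) = - (SUP a\<in>A. - g a :: real)"
  by (simp add: Inf_real_def image_image)

lemma bddA: "(\<And>a. a \<in> A \<Longrightarrow> \<bar>f a\<bar> \<le> (B::real)) \<Longrightarrow> bdd_above (f ` A)"
  by (rule bdd_aboveI[of _ B]) (force simp: abs_le_iff)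
lemma bddB: "(\<And>a. a \<in> A \<Longrightarrow> \<bar>f a\<bar> \<le> (B::real)) \<Longrightarrow> bdd_below (f ` A)"
  by (rule bdd_belowI[of _ "-B"]) (force simp: abs_le_iff)

lemma SUP_le_SUP:
  fixes f g :: "'b \<Rightarrow> real"
  assumes "A \<noteq> {}" "\<And>b. b \<in> B \<Longrightarrow> \<bar>g b\<bar> \<le> Bd" "\<And>a. a \<in> A \<Longrightarrow> \<exists>b\<in>B. f a \<le> g b"
  shows "(SUP a\<in>A. f a) \<le> (SUP b\<in>B. g b)"
  by (rule cSUP_mono[OF assms(1) bddA[OF assms(2)]]) (use assms(3) in auto)

lemma INF_le_INF:
  fixes f g :: "'b \<Rightarrow> real"
  assumes "B \<noteq> {}" "\<And>a. a \<in> A \<Longrightarrow> \<bar>f a\<bar> \<le> Bd" "\<And>b. b \<in> B \<Longrightarrow> \<exists>a\<in>A. f a \<le> g b"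
  shows "(INF a\<in>A. f a) \<le> (INF b\<in>B. g b)"
  by (rule cINF_mono[OF assms(1) bddB[OF assms(2)]]) (use assms(3) in auto)

lemma SUP_add_const:
  fixes f :: "'b \<Rightarrow> real"
  assumes "A \<noteq> {}" "\<And>a. a \<in> A \<Longrightarrow> \<bar>f a\<bar> \<le> B"
  shows "(SUP a\<in>A. f a + c) = (SUP a\<in>A. f a) + c"
proof (rule antisym)
  have b1: "bdd_above (f ` A)" by (rule bddA[OF assms(2)])
  have b2: "bdd_above ((\<lambda>a. f a + c) ` A)" using assms(2)
    by (intro bdd_aboveI[of _ "B + c"]) (force simp: abs_le_iff)
  show "(SUP a\<in>A. f a + c) \<le> (SUP a\<in>A. f a) + c"
    by (rule cSUP_least[OF assms(1)]) (simp add: cSUP_upper[OF _ b1])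
  have "(SUP a\<in>A. f a) \<le> (SUP a\<in>A. f a + c) - c"
    by (rule cSUP_least[OF assms(1)]) (simp add: cSUP_upper[OF _ b2] le_diff_eq)
  then show "(SUP a\<in>A. f a) + c \<le> (SUP a\<in>A. f a + c)" by simp
qed

lemma INF_add_const:
  fixes f :: "'b \<Rightarrow> real"
  assumes "A \<noteq> {}" "\<And>a. a \<in> A \<Longrightarrow> \<bar>f a\<bar> \<le> B"
  shows "(INF a\<in>A. f a + c) = (INF a\<in>A. f a) + c"
proof -
  have "(SUP a\<in>A. - f a + - c) = (SUP a\<in>A. - f a) + - c"
    by (rule SUP_add_const[OF assms(1), of _ B]) (use assms(2) in auto)
  then show ?thesis by (simp add: INF_dual)
qed

lemma SUP_scal_pos:
  fixes f :: "'b \<Rightarrow> real"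
  assumes "A \<noteq> {}" "\<And>a. a \<in> A \<Longrightarrow> \<bar>f a\<bar> \<le> B" "r \<ge> 0"
  shows "r * (SUP a\<in>A. f a) = (SUP a\<in>A. r * f a)"
proof (cases "r = 0")
  case True then show ?thesis using assms by simp
next
  case False then have r: "r > 0" using assms by simp
  have b1: "bdd_above (f ` A)" by (rule bddA[OF assms(2)])
  have b2: "bdd_above ((\<lambda>a. r * f a) ` A)" using assms(2)
    by (intro bddA[of _ _ "r * B"]) (use r in \<open>simp add: abs_mult mult_left_mono\<close>)
  show ?thesis
  proof (rule antisym)
    have "(SUP a\<in>A. f a) \<le> (SUP a\<in>A. r * f a) / r"
      by (rule cSUP_least[OF assms(1)]) (simp add: cSUP_upper[OF _ b2] r pos_le_divide_eq mult.commute)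
    then show "r * (SUP a\<in>A. f a) \<le> (SUP a\<in>A. r * f a)" using r by (simp add: pos_le_divide_eq mult.commute)
    show "(SUP a\<in>A. r * f a) \<le> r * (SUP a\<in>A. f a)"
      by (rule cSUP_least[OF assms(1)]) (simp add: cSUP_upper[OF _ b1] r)
  qed
qed

lemma SUP_scal_neg:
  fixes f :: "'b \<Rightarrow> real"
  assumes "A \<noteq> {}" "\<And>a. a \<in> A \<Longrightarrow> \<bar>f a\<bar> \<le> B" "r < 0"
  shows "r * (SUP a\<in>A. f a) = (INF a\<in>A. r * f a)"
proof -
  have "(-r) * (SUP a\<in>A. f a) = (SUP a\<in>A. (-r) * f a)"
    by (rule SUP_scal_pos[OF assms(1,2)]) (use assms(3) in auto)
  then show ?thesis by (simp add: INF_dual)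
qed

lemma INF_scal_pos:
  fixes f :: "'b \<Rightarrow> real"
  assumes "A \<noteq> {}" "\<And>a. a \<in> A \<Longrightarrow> \<bar>f a\<bar> \<le> B" "r \<ge> 0"
  shows "r * (INF a\<in>A. f a) = (INF a\<in>A. r * f a)"
proof -
  have "r * (SUP a\<in>A. - f a) = (SUP a\<in>A. r * - f a)"
    by (rule SUP_scal_pos[OF assms(1) _ assms(3), of _ B]) (use assms(2) in auto)
  then show ?thesis by (simp add: INF_dual)
qed

lemma INF_scal_neg:
  fixes f :: "'b \<Rightarrow> real"
  assumes "A \<noteq> {}" "\<And>a. a \<in> A \<Longrightarrow> \<bar>f a\<bar> \<le> B" "r < 0"
  shows "r * (INF a\<in>A. f a) = (SUP a\<in>A. r * f a)"
proof -
  have "(-r) * (SUP a\<in>A. - f a) = (SUP a\<in>A. (-r) * - f a)"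
    by (rule SUP_scal_pos[OF assms(1), of _ B]) (use assms(2,3) in auto)
  then show ?thesis by (simp add: INF_dual)
qed

lemma SUP_swap:
  fixes f :: "'b \<Rightarrow> 'c \<Rightarrow> real"
  assumes A: "A \<noteq> {}" and C: "C \<noteq> {}" and bd: "\<And>a c. a \<in> A \<Longrightarrow> c \<in> C \<Longrightarrow> \<bar>f a c\<bar> \<le> B"
  shows "(SUP a\<in>A. SUP c\<in>C. f a c) = (SUP c\<in>C. SUP a\<in>A. f a c)"
proof -
  have i1: "\<bar>SUP c\<in>C. f a c\<bar> \<le> B" if "a \<in> A" for a using bd that by (intro abs_SUP_le[OF C])
  have i2: "\<bar>SUP a\<in>A. f a c\<bar> \<le> B" if "c \<in> C" for c using bd that by (intro abs_SUP_le[OF A])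
  have "(SUP a\<in>A. SUP c\<in>C. f a c) \<le> (SUP c\<in>C. SUP a\<in>A. f a c)" if
    A: "A \<noteq> {}" and C: "C \<noteq> {}" and bd: "\<And>a c. a \<in> A \<Longrightarrow> c \<in> C \<Longrightarrow> \<bar>f a c\<bar> \<le> B"
    for A C and f :: "'d \<Rightarrow> 'e \<Rightarrow> real"
  proof (rule cSUP_least[OF A])
    fix a assume a: "a \<in> A"
    show "(SUP c\<in>C. f a c) \<le> (SUP c\<in>C. SUP a\<in>A. f a c)"
    proof (rule cSUP_least[OF C])
      fix c assume c: "c \<in> C"
      have i2: "\<bar>SUP a\<in>A. f a c\<bar> \<le> B" if "c \<in> C" for c using bd that by (intro abs_SUP_le[OF A])
      have "f a c \<le> (SUP a\<in>A. f a c)" by (rule cSUP_upper[OF a bddA]) (use bd c in auto)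
      also have "\<dots> \<le> (SUP c\<in>C. SUP a\<in>A. f a c)" by (rule cSUP_upper[OF c bddA[OF i2]])
      finally show "f a c \<le> (SUP c\<in>C. SUP a\<in>A. f a c)" .
    qed
  qed
  from this[of A C f] this[of C A "\<lambda>c a. f a c"] show ?thesis using A C bd by force
qed

lemma INF_swap:
  fixes f :: "'b \<Rightarrow> 'c \<Rightarrow> real"
  assumes A: "A \<noteq> {}" and C: "C \<noteq> {}" and bd: "\<And>a c. a \<in> A \<Longrightarrow> c \<in> C \<Longrightarrow> \<bar>f a c\<bar> \<le> B"
  shows "(INF a\<in>A. INF c\<in>C. f a c) = (INF c\<in>C. INF a\<in>A. f a c)"
proof -
  have "(SUP a\<in>A. SUP c\<in>C. - f a c) = (SUP c\<in>C. SUP a\<in>A. - f a c)"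
    by (rule SUP_swap[OF A C, of _ B]) (use bd in auto)
  then show ?thesis by (simp add: INF_dual)
qed

lemma fresh_ex: "finite (A::nat set) \<Longrightarrow> \<exists>x. x \<notin> A"
proof
  assume "finite A"
  show "Suc (Max A) \<notin> A"
  proof
    assume "Suc (Max A) \<in> A"
    then have "Suc (Max A) \<le> Max A" using Max_ge[OF \<open>finite A\<close>] by blast
    then show False by simp
  qed
qed

lemma U_core:
  fixes g :: "'a \<Rightarrow> real"
  assumes C: "C \<noteq> {}" and cl: "\<And>x y. x\<in>C \<Longrightarrow> y\<in>C \<Longrightarrow> m x y \<in> C"
    and idm: "\<And>x. x\<in>C \<Longrightarrow> m x x = x" and bd: "\<And>a. a\<in>C \<Longrightarrow> \<bar>g a\<bar> \<le> B"
  shows "(SUP a\<in>C. g a) = (SUP b\<in>C. SUP c\<in>C. g (m c b))"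
proof (rule antisym)
  have ib: "\<bar>SUP c\<in>C. g (m c b)\<bar> \<le> B" if "b \<in> C" for b
    by (rule abs_SUP_le[OF C]) (use bd cl that in auto)
  show "(SUP a\<in>C. g a) \<le> (SUP b\<in>C. SUP c\<in>C. g (m c b))"
  proof (rule SUP_le_SUP[OF C ib])
    fix a assume a: "a \<in> C"
    have "g a \<le> (SUP c\<in>C. g (m c a))"
      by (rule cSUP_upper2[OF bddA a]) (use bd cl a idm in auto)
    then show "\<exists>b\<in>C. g a \<le> (SUP c\<in>C. g (m c b))" using a by blast
  qed
  show "(SUP b\<in>C. SUP c\<in>C. g (m c b)) \<le> (SUP a\<in>C. g a)"
  proof (rule cSUP_least[OF C])
    fix b assume b: "b \<in> C"
    show "(SUP c\<in>C. g (m c b)) \<le> (SUP a\<in>C. g a)"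
      by (rule cSUP_least[OF C], rule cSUP_upper[OF _ bddA]) (use bd cl b in auto)
  qed
qed

lemma U_core_inf:
  fixes g :: "'a \<Rightarrow> real"
  assumes C: "C \<noteq> {}" and cl: "\<And>x y. x\<in>C \<Longrightarrow> y\<in>C \<Longrightarrow> m x y \<in> C"
    and idm: "\<And>x. x\<in>C \<Longrightarrow> m x x = x" and bd: "\<And>a. a\<in>C \<Longrightarrow> \<bar>g a\<bar> \<le> B"
  shows "(INF a\<in>C. g a) = (INF b\<in>C. INF c\<in>C. g (m c b))"
proof -
  have "(SUP a\<in>C. - g a) = (SUP b\<in>C. SUP c\<in>C. - g (m c b))"
    by (rule U_core[where m=m and C=C and g="\<lambda>a. - g a" and B=B, OF C cl idm]) (use bd in auto)
  then show ?thesis by (simp add: INF_dual)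
qed

definition Qu :: "bool \<Rightarrow> nat \<Rightarrow> fm \<Rightarrow> fm" where
  "Qu b x f = (if b then FSup x f else FInf x f)"
definition QB :: "bool \<Rightarrow> nat \<Rightarrow> trm \<Rightarrow> fm \<Rightarrow> fm" where
  "QB b x t f = (if b then FBSup x t f else FBInf x t f)"

lemma fv_Qu[simp]: "fv (Qu b x f) = fv f - {x}" by (simp add: Qu_def)
lemma fv_QB[simp]: "fv (QB b x t f) = tvars t \<union> (fv f - {x})" by (simp add: QB_def)
lemma sigma0_QB[simp]: "sigma0 (QB b x t f) = (x \<notin> tvars t \<and> sigma0 f)" by (simp add: QB_def)

locale mdl =
  fixes K :: "'a lstr"
  assumes mK: "metric_lstr K" and aK: "AA0 K"
begin

abbreviation "C \<equiv> carrier K"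

lemma Cne: "C \<noteq> {}" using ml(1)[OF mK] by auto
lemma mtC: "x \<in> C \<Longrightarrow> y \<in> C \<Longrightarrow> mt K x y \<in> C" using ml(3)[OF mK] by auto
lemma bnd: "range \<sigma> \<subseteq> C \<Longrightarrow> \<bar>feval K \<sigma> \<phi>\<bar> \<le> fb \<phi>" using feval_bnd[OF mK] by auto
lemma tC: "range \<sigma> \<subseteq> C \<Longrightarrow> teval K \<sigma> t \<in> C" using teval_in[OF mK] by auto
lemma idm: "x \<in> C \<Longrightarrow> mt K x x = x" using aa[OF aK] by blast
lemma asc: "x \<in> C \<Longrightarrow> y \<in> C \<Longrightarrow> z \<in> C \<Longrightarrow> mt K (mt K x y) z = mt K x (mt K y z)" using aa[OF aK] by blast

lemma U_sem:
  assumes s: "s \<noteq> x" "s \<notin> fv F" and \<sigma>: "range \<sigma> \<subseteq> C"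
  shows "feval K \<sigma> (Qu b x F) = feval K \<sigma> (Qu b s (QB b x (Var s) F))"
proof -
  have e: "feval K (\<sigma>(s:=a, x:=v)) F = feval K (\<sigma>(x:=v)) F" for a v
    by (rule feval_cong) (use s in auto)
  have bd: "\<bar>feval K (\<sigma>(x:=v)) F\<bar> \<le> fb F" if "v \<in> C" for v
    by (rule bnd) (use \<sigma> that in auto)
  show ?thesis
  proof (cases b)
    case True then show ?thesis
      by (simp add: Qu_def QB_def e U_core[where m="mt K", OF Cne mtC idm bd])
  next
    case False then show ?thesis
      by (simp add: Qu_def QB_def e U_core_inf[where m="mt K", OF Cne mtC idm bd])
  qed
qed

lemma W_sem:
  assumes w: "w \<notin> tvars t" "w \<noteq> x" "w \<notin> fv F" and \<sigma>: "range \<sigma> \<subseteq> C"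
  shows "feval K \<sigma> (QB b x t F) = feval K \<sigma> (QB b w t (QB b x (Var w) F))"
proof -
  define T where "T = teval K \<sigma> t"
  have T: "T \<in> C" unfolding T_def by (rule tC[OF \<sigma>])
  have e: "feval K (\<sigma>(w:=a, x:=v)) F = feval K (\<sigma>(x:=v)) F" for a v
    by (rule feval_cong) (use w in auto)
  have bd: "\<bar>feval K (\<sigma>(x:=mt K v T)) F\<bar> \<le> fb F" if "v \<in> C" for v
    by (rule bnd) (use \<sigma> that T mtC in auto)
  have r: "mt K c (mt K b T) = mt K (mt K c b) T" if "b \<in> C" "c \<in> C" for b c
    using asc[OF that(2,1) T] by simp
  show ?thesis
  proof (cases b)
    case True
    have "(SUP a\<in>C. feval K (\<sigma>(x:=mt K a T)) F) = (SUP b\<in>C. SUP c\<in>C. feval K (\<sigma>(x:=mt K (mt K c b) T)) F)"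
      by (rule U_core[where m="mt K", OF Cne mtC idm bd])
    also have "\<dots> = (SUP b\<in>C. SUP c\<in>C. feval K (\<sigma>(x:=mt K c (mt K b T))) F)"
      by (intro SUP_cong refl) (simp add: r)
    finally show ?thesis using True by (simp add: Qu_def QB_def e T_def)
  next
    case False
    have "(INF a\<in>C. feval K (\<sigma>(x:=mt K a T)) F) = (INF b\<in>C. INF c\<in>C. feval K (\<sigma>(x:=mt K (mt K c b) T)) F)"
      by (rule U_core_inf[where m="mt K", OF Cne mtC idm bd])
    also have "\<dots> = (INF b\<in>C. INF c\<in>C. feval K (\<sigma>(x:=mt K c (mt K b T))) F)"
      by (intro INF_cong refl) (simp add: r)
    finally show ?thesis using False by (simp add: Qu_def QB_def e T_def)
  qed
qed

lemma swap_sem: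
  assumes s: "s \<noteq> x" "s \<notin> tvars t" and \<sigma>: "range \<sigma> \<subseteq> C"
  shows "feval K \<sigma> (QB b x t (Qu b s R)) = feval K \<sigma> (Qu b s (QB b x t R))"
proof -
  define T where "T = teval K \<sigma> t"
  have T: "T \<in> C" unfolding T_def by (rule tC[OF \<sigma>])
  have tt: "teval K (\<sigma>(s:=c)) t = T" for c unfolding T_def by (rule teval_irr[OF s(2)])
  have tw: "\<sigma>(x:=v, s:=c) = \<sigma>(s:=c, x:=v)" for v c by (rule ext) (use s(1) in auto)
  have bd: "\<bar>feval K (\<sigma>(x:=mt K a T, s:=c)) R\<bar> \<le> fb R" if "a \<in> C" "c \<in> C" for a c
    by (rule bnd) (use \<sigma> that T mtC in auto)
  have L1: "feval K \<sigma> (FBSup x t (FSup s R)) = (SUP a\<in>C. SUP c\<in>C. feval K (\<sigma>(x:=mt K a T, s:=c)) R)"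
    by (simp add: T_def)
  have R1: "feval K \<sigma> (FSup s (FBSup x t R)) = (SUP c\<in>C. SUP a\<in>C. feval K (\<sigma>(x:=mt K a T, s:=c)) R)"
    by (simp only: feval.simps teval.simps tt tw)
  have L2: "feval K \<sigma> (FBInf x t (FInf s R)) = (INF a\<in>C. INF c\<in>C. feval K (\<sigma>(x:=mt K a T, s:=c)) R)"
    by (simp add: T_def)
  have R2: "feval K \<sigma> (FInf s (FBInf x t R)) = (INF c\<in>C. INF a\<in>C. feval K (\<sigma>(x:=mt K a T, s:=c)) R)"
    by (simp only: feval.simps teval.simps tt tw)
  show ?thesis
  proof (cases b)
    case True
    have E: "feval K \<sigma> (FBSup x t (FSup s R)) = feval K \<sigma> (FSup s (FBSup x t R))"
      unfolding L1 R1 by (rule SUP_swap[OF Cne Cne bd])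
    show ?thesis using E True by (simp add: Qu_def QB_def)
  next
    case False
    have E: "feval K \<sigma> (FBInf x t (FInf s R)) = feval K \<sigma> (FInf s (FBInf x t R))"
      unfolding L2 R2 by (rule INF_swap[OF Cne Cne bd])
    show ?thesis using E False by (simp add: Qu_def QB_def)
  qed
qed


lemma bound_var_swap:
  assumes "tt \<notin> fv X" "tt \<noteq> x"
  shows "feval K (\<rho>(tt := teval K \<rho> t)) (FBInf x (Var tt) X) = feval K \<rho> (FBInf x t X)"
proof -
  have "feval K (\<rho>(tt := T, x := v)) X = feval K (\<rho>(x := v)) X" for T v
    by (rule feval_cong) (use assms in auto)
  then show ?thesis by simp
qed

lemma coll_inf:
  assumes coll: "collection K" and xs: "x \<noteq> s" and s': "s' \<notin> fv R" "s' \<noteq> x" "s' \<noteq> s" "s' \<notin> tvars t"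
    and \<sigma>: "range \<sigma> \<subseteq> C"
  shows "feval K \<sigma> (FBInf x t (FSup s R)) = feval K \<sigma> (FSup s' (FBInf x t (FBSup s (Var s') R)))"
proof -
  have "finite (fv R \<union> tvars t \<union> {x, s, s'})" by (simp add: fv_fin tvars_fin)
  from fresh_ex[OF this] obtain tt where tt: "tt \<notin> fv R \<union> tvars t \<union> {x, s, s'}" ..
  define T where "T = teval K \<sigma> t"
  have T: "T \<in> C" unfolding T_def by (rule tC[OF \<sigma>])
  have \<sigma>': "range (\<sigma>(tt := T)) \<subseteq> C" using \<sigma> T by auto
  have CL: "\<And>\<phi> x ys t s \<sigma>. x \<notin> set ys \<and> t \<noteq> x \<and> t \<notin> set ys \<and> t \<notin> fv \<phi> \<and>
        s \<noteq> x \<and> s \<noteq> t \<and> s \<notin> set ys \<and> s \<notin> fv \<phi> \<and>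
        range \<sigma> \<subseteq> C \<Longrightarrow>
        feval K \<sigma> (FBInf x (Var t) (sups ys \<phi>)) =
        feval K \<sigma> (FSup s (FBInf x (Var t) (bsups ys s \<phi>)))" using coll unfolding collection_def by blast
  have E: "feval K (\<sigma>(tt := T)) (FBInf x (Var tt) (sups [s] R)) =
      feval K (\<sigma>(tt := T)) (FSup s' (FBInf x (Var tt) (bsups [s] s' R)))"
  proof (rule CL)
    show "x \<notin> set [s] \<and> tt \<noteq> x \<and> tt \<notin> set [s] \<and> tt \<notin> fv R \<and> s' \<noteq> x \<and> s' \<noteq> tt \<and> s' \<notin> set [s] \<and> s' \<notin> fv R \<and> range (\<sigma>(tt := T)) \<subseteq> C"
      using \<sigma>' xs s' tt by auto
  qed
  have L: "feval K (\<sigma>(tt := T)) (FBInf x (Var tt) (sups [s] R)) = feval K \<sigma> (FBInf x t (FSup s R))"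
    unfolding sups_def T_def by (simp only: foldr.simps o_apply id_apply) (rule bound_var_swap, use tt in auto)
  have R: "feval K (\<sigma>(tt := T)) (FSup s' (FBInf x (Var tt) (bsups [s] s' R))) =
      feval K \<sigma> (FSup s' (FBInf x t (FBSup s (Var s') R)))"
  proof -
    have "feval K (\<sigma>(tt := T, s' := a)) (FBInf x (Var tt) (FBSup s (Var s') R)) =
        feval K (\<sigma>(s' := a)) (FBInf x t (FBSup s (Var s') R))" for a
    proof -
      have "\<sigma>(tt := T, s' := a) = \<sigma>(s' := a, tt := teval K (\<sigma>(s' := a)) t)"
        using tt s'(4) by (auto simp: T_def teval_irr)
      then show ?thesis by (simp only:) (rule bound_var_swap, use tt in auto)
    qed
    then show ?thesis by (simp add: bsups_def)
  qed
  show ?thesis using E L R by simp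
qed

lemma coll_sup:
  assumes coll: "collection K" and xs: "x \<noteq> s" and s': "s' \<notin> fv R" "s' \<noteq> x" "s' \<noteq> s" "s' \<notin> tvars t"
    and \<sigma>: "range \<sigma> \<subseteq> C"
  shows "feval K \<sigma> (FBSup x t (FInf s R)) = feval K \<sigma> (FInf s' (FBSup x t (FBInf s (Var s') R)))"
proof -
  have "feval K \<sigma> (FBInf x t (FSup s (FScal (-1) R))) = feval K \<sigma> (FSup s' (FBInf x t (FBSup s (Var s') (FScal (-1) R))))"
    by (rule coll_inf[OF coll xs]) (use s' \<sigma> in simp_all)
  then show ?thesis by (simp add: INF_dual)
qed

lemma coll_sem:
  assumes coll: "collection K" and xs: "x \<noteq> s" and s': "s' \<notin> fv R" "s' \<noteq> x" "s' \<noteq> s" "s' \<notin> tvars t"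
    and \<sigma>: "range \<sigma> \<subseteq> C"
  shows "feval K \<sigma> (QB b x t (Qu (\<not>b) s R)) = feval K \<sigma> (Qu (\<not>b) s' (QB b x t (QB (\<not>b) s (Var s') R)))"
  using coll_inf[OF assms] coll_sup[OF assms] by (cases b) (simp_all add: Qu_def QB_def)

end

fun pre :: "(bool \<times> nat) list \<Rightarrow> fm \<Rightarrow> fm" where
  "pre [] \<theta> = \<theta>"
| "pre (p # q) \<theta> = Qu (fst p) (snd p) (pre q \<theta>)"

definition dualq :: "(bool \<times> nat) list \<Rightarrow> (bool \<times> nat) list" where
  "dualq q = map (\<lambda>p. (\<not> fst p, snd p)) q"

lemma fv_pre: "fv (pre q \<theta>) = fv \<theta> - set (map snd q)"
  by (induction q) auto

lemma pre_append: "pre (q1 @ q2) \<theta> = pre q1 (pre q2 \<theta>)"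
  by (induction q1) auto

lemma sigma0_Qu: "sigma0 (Qu b x f) = False" by (simp add: Qu_def)

fun occ :: "nat \<Rightarrow> bool \<Rightarrow> fm \<Rightarrow> bool" where
  "occ v p FOne = True"
| "occ v p (FDist a b) = (v \<notin> tvars a \<and> v \<notin> tvars b)"
| "occ v p (FAdd f g) = (occ v p f \<and> occ v p g)"
| "occ v p (FScal r f) = (if r \<ge> 0 then occ v p f else occ v (\<not>p) f)"
| "occ v p (FSup x f) = (x = v \<or> occ v p f)"
| "occ v p (FInf x f) = (x = v \<or> occ v p f)"
| "occ v p (FBSup x t f) = ((if t = Var v then p else v \<notin> tvars t) \<and> (x = v \<or> occ v p f))"
| "occ v p (FBInf x t f) = ((if t = Var v then \<not>p else v \<notin> tvars t) \<and> (x = v \<or> occ v p f))"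

lemma occ_Qu[simp]: "occ v p (Qu b x f) = (x = v \<or> occ v p f)" by (simp add: Qu_def)
lemma occ_QB[simp]: "occ v p (QB b x t f) = ((if t = Var v then p = b else v \<notin> tvars t) \<and> (x = v \<or> occ v p f))"
  by (cases b) (auto simp: QB_def)

lemma occ_fresh: "v \<notin> fv \<phi> \<Longrightarrow> occ v p \<phi>"
  by (induction \<phi> arbitrary: p) auto

lemma occ_pre: "occ v p \<theta> \<Longrightarrow> occ v p (pre q \<theta>)"
  by (induction q) auto

context mdl begin

definition eqv :: "fm \<Rightarrow> fm \<Rightarrow> bool" where
  "eqv F G \<longleftrightarrow> (\<forall>\<sigma>. range \<sigma> \<subseteq> C \<longrightarrow> feval K \<sigma> F = feval K \<sigma> G)"

lemma eqv_refl: "eqv F F" by (simp add: eqv_def)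
lemma eqv_sym: "eqv F G \<Longrightarrow> eqv G F" by (simp add: eqv_def)
lemma eqv_trans[trans]: "eqv F G \<Longrightarrow> eqv G H \<Longrightarrow> eqv F H" by (simp add: eqv_def)

lemma eqv_Qu: assumes "eqv F G" shows "eqv (Qu b x F) (Qu b x G)"
  unfolding eqv_def
proof (intro allI impI)
  fix \<sigma> :: "nat \<Rightarrow> 'a" assume \<sigma>: "range \<sigma> \<subseteq> C"
  have "feval K (\<sigma>(x:=a)) F = feval K (\<sigma>(x:=a)) G" if "a \<in> C" for a
    using assms[unfolded eqv_def, rule_format, of "\<sigma>(x:=a)"] \<sigma> that by auto
  then show "feval K \<sigma> (Qu b x F) = feval K \<sigma> (Qu b x G)"
    unfolding Qu_def by (auto intro!: SUP_cong INF_cong)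
qed

lemma eqv_QB: assumes "eqv F G" shows "eqv (QB b x t F) (QB b x t G)"
  unfolding eqv_def
proof (intro allI impI)
  fix \<sigma> :: "nat \<Rightarrow> 'a" assume \<sigma>: "range \<sigma> \<subseteq> C"
  have "feval K (\<sigma>(x:=mt K a (teval K \<sigma> t))) F = feval K (\<sigma>(x:=mt K a (teval K \<sigma> t))) G" if "a \<in> C" for a
    using assms[unfolded eqv_def, rule_format, of "\<sigma>(x:=mt K a (teval K \<sigma> t))"] \<sigma> that mtC tC by auto
  then show "feval K \<sigma> (QB b x t F) = feval K \<sigma> (QB b x t G)"
    unfolding QB_def by (auto intro!: SUP_cong INF_cong)
qed

lemma eqv_FSup: "eqv F G \<Longrightarrow> eqv (FSup x F) (FSup x G)"
  using eqv_Qu[of F G True] by (simp add: Qu_def)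
lemma eqv_FInf: "eqv F G \<Longrightarrow> eqv (FInf x F) (FInf x G)"
  using eqv_Qu[of F G False] by (simp add: Qu_def)
lemma eqv_FBSup: "eqv F G \<Longrightarrow> eqv (FBSup x t F) (FBSup x t G)"
  using eqv_QB[of F G True] by (simp add: QB_def)
lemma eqv_FBInf: "eqv F G \<Longrightarrow> eqv (FBInf x t F) (FBInf x t G)"
  using eqv_QB[of F G False] by (simp add: QB_def)

lemma eqv_pre: "eqv F G \<Longrightarrow> eqv (pre q F) (pre q G)"
  by (induction q) (auto intro: eqv_Qu)

lemma add_Qu_l:
  assumes "s \<notin> fv H" shows "eqv (FAdd (Qu c s G) H) (Qu c s (FAdd G H))"
  unfolding eqv_def
proof (intro allI impI)
  fix \<sigma> :: "nat \<Rightarrow> 'a" assume \<sigma>: "range \<sigma> \<subseteq> C"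
  have e: "feval K (\<sigma>(s:=a)) H = feval K \<sigma> H" for a by (rule feval_irr[OF assms])
  have bd: "\<bar>feval K (\<sigma>(s:=a)) G\<bar> \<le> fb G" if "a \<in> C" for a by (rule bnd) (use \<sigma> that in auto)
  show "feval K \<sigma> (FAdd (Qu c s G) H) = feval K \<sigma> (Qu c s (FAdd G H))"
    by (cases c) (simp_all add: Qu_def e SUP_add_const[OF Cne bd] INF_add_const[OF Cne bd])
qed

lemma add_Qu_r:
  assumes "s \<notin> fv H" shows "eqv (FAdd H (Qu c s G)) (Qu c s (FAdd H G))"
proof -
  have "eqv (FAdd H (Qu c s G)) (FAdd (Qu c s G) H)" by (simp add: eqv_def)
  also have "eqv \<dots> (Qu c s (FAdd G H))" by (rule add_Qu_l[OF assms])
  also have "eqv \<dots> (Qu c s (FAdd H G))" by (rule eqv_Qu) (simp add: eqv_def)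
  finally show ?thesis .
qed

lemma scal_Qu: "eqv (FScal r (Qu c s G)) (Qu (if r \<ge> 0 then c else \<not>c) s (FScal r G))"
  unfolding eqv_def
proof (intro allI impI)
  fix \<sigma> :: "nat \<Rightarrow> 'a" assume \<sigma>: "range \<sigma> \<subseteq> C"
  have bd: "\<bar>feval K (\<sigma>(s:=a)) G\<bar> \<le> fb G" if "a \<in> C" for a by (rule bnd) (use \<sigma> that in auto)
  show "feval K \<sigma> (FScal r (Qu c s G)) = feval K \<sigma> (Qu (if r \<ge> 0 then c else \<not>c) s (FScal r G))"
  proof (cases "r \<ge> 0")
    case True then show ?thesis
      by (cases c) (simp_all add: Qu_def SUP_scal_pos[OF Cne bd] INF_scal_pos[OF Cne bd])
  next
    case False then have "r < 0" by simp
    then show ?thesis using False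
      by (cases c) (simp_all add: Qu_def SUP_scal_neg[OF Cne bd] INF_scal_neg[OF Cne bd])
  qed
qed

lemma add_pre_l: "set (map snd q) \<inter> fv H = {} \<Longrightarrow> eqv (FAdd (pre q F) H) (pre q (FAdd F H))"
proof (induction q)
  case Nil then show ?case by (simp add: eqv_refl)
next
  case (Cons p q)
  have "eqv (FAdd (pre (p#q) F) H) (Qu (fst p) (snd p) (FAdd (pre q F) H))"
    using Cons.prems by (simp add: add_Qu_l)
  also have "eqv \<dots> (pre (p#q) (FAdd F H))"
    using Cons by (simp add: eqv_Qu)
  finally show ?case .
qed

lemma add_pre_r: "set (map snd q) \<inter> fv H = {} \<Longrightarrow> eqv (FAdd H (pre q F)) (pre q (FAdd H F))"
proof (induction q)
  case Nil then show ?case by (simp add: eqv_refl)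
next
  case (Cons p q)
  have "eqv (FAdd H (pre (p#q) F)) (Qu (fst p) (snd p) (FAdd H (pre q F)))"
    using Cons.prems by (simp add: add_Qu_r)
  also have "eqv \<dots> (pre (p#q) (FAdd H F))"
    using Cons by (simp add: eqv_Qu)
  finally show ?case .
qed

lemma scal_pre: "eqv (FScal r (pre q F)) (pre (if r \<ge> 0 then q else dualq q) (FScal r F))"
proof (induction q)
  case Nil then show ?case by (simp add: eqv_refl dualq_def)
next
  case (Cons p q)
  have "eqv (FScal r (pre (p#q) F)) (Qu (if r \<ge> 0 then fst p else \<not> fst p) (snd p) (FScal r (pre q F)))"
    by (simp add: scal_Qu)
  also have "eqv \<dots> (Qu (if r \<ge> 0 then fst p else \<not> fst p) (snd p) (pre (if r \<ge> 0 then q else dualq q) (FScal r F)))"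
    by (rule eqv_Qu[OF Cons])
  also have "\<dots> = pre (if r \<ge> 0 then p # q else dualq (p # q)) (FScal r F)"
    by (simp add: dualq_def)
  finally show ?case .
qed

end

definition rel :: "bool \<Rightarrow> real \<Rightarrow> real \<Rightarrow> bool" where
  "rel p x y \<longleftrightarrow> (if p then x \<le> y else y \<le> x)"

lemma rel_refl: "rel p x x" by (simp add: rel_def)
lemma rel_add: "rel p x y \<Longrightarrow> rel p x' y' \<Longrightarrow> rel p (x+x') (y+y')" by (auto simp: rel_def)
lemma rel_scal_pos: "r \<ge> 0 \<Longrightarrow> rel p x y \<Longrightarrow> rel p (r*x) (r*y)"
  by (cases p) (auto simp: rel_def intro: mult_left_mono)
lemma rel_scal_neg: "\<not> r \<ge> 0 \<Longrightarrow> rel (\<not>p) x y \<Longrightarrow> rel p (r*x) (r*y)"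
  by (cases p) (auto simp: rel_def intro: mult_left_mono_neg)

lemma SUP_mono_pt:
  fixes f g :: "'b \<Rightarrow> real"
  assumes "A \<noteq> {}" "\<And>a. a \<in> A \<Longrightarrow> \<bar>g a\<bar> \<le> B" "\<And>a. a \<in> A \<Longrightarrow> f a \<le> g a"
  shows "(SUP a\<in>A. f a) \<le> (SUP a\<in>A. g a)"
proof (rule SUP_le_SUP[OF assms(1,2)])
  fix a assume "a \<in> A" then show "\<exists>b\<in>A. f a \<le> g b" using assms(3) by blast
qed

lemma INF_mono_pt:
  fixes f g :: "'b \<Rightarrow> real"
  assumes "A \<noteq> {}" "\<And>a. a \<in> A \<Longrightarrow> \<bar>f a\<bar> \<le> B" "\<And>a. a \<in> A \<Longrightarrow> f a \<le> g a"
  shows "(INF a\<in>A. f a) \<le> (INF a\<in>A. g a)"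
proof (rule INF_le_INF[OF assms(1,2)])
  fix a assume "a \<in> A" then show "\<exists>b\<in>A. f b \<le> g a" using assms(3) by blast
qed

context mdl begin

lemma mono_occ:
  assumes a: "a \<in> C" and b: "b \<in> C" and ab: "mt K a b = a"
  shows "occ v p \<phi> \<Longrightarrow> range \<sigma> \<subseteq> C \<Longrightarrow> rel p (feval K (\<sigma>(v:=a)) \<phi>) (feval K (\<sigma>(v:=b)) \<phi>)"
proof (induction \<phi> arbitrary: \<sigma> p)
  case FOne then show ?case by (simp add: rel_def)
next
  case (FDist s t)
  have "teval K (\<sigma>(v:=a)) s = teval K (\<sigma>(v:=b)) s" "teval K (\<sigma>(v:=a)) t = teval K (\<sigma>(v:=b)) t"
    using FDist(1) teval_irr[of v s K \<sigma>] teval_irr[of v t K \<sigma>] by simp_all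
  then have "feval K (\<sigma>(v:=a)) (FDist s t) = feval K (\<sigma>(v:=b)) (FDist s t)"
    by (simp only: feval.simps)
  then show ?case by (simp only: rel_def order_refl if_True if_False split: if_split) blast
next
  case (FAdd f g)
  have "occ v p f" "occ v p g" using FAdd.prems(1) by simp_all
  then show ?case unfolding feval.simps by (intro rel_add FAdd.IH FAdd.prems(2))
next
  case (FScal r f)
  show ?case
  proof (cases "r \<ge> 0")
    case True
    then have o: "occ v p f" using FScal.prems(1) by simp
    have "rel p (feval K (\<sigma>(v:=a)) f) (feval K (\<sigma>(v:=b)) f)" by (rule FScal.IH[OF o FScal.prems(2)])
    then show ?thesis unfolding feval.simps by (rule rel_scal_pos[OF True])
  next
    case False
    then have o: "occ v (\<not>p) f" using FScal.prems(1) by simp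
    have "rel (\<not>p) (feval K (\<sigma>(v:=a)) f) (feval K (\<sigma>(v:=b)) f)" by (rule FScal.IH[OF o FScal.prems(2)])
    then show ?thesis unfolding feval.simps by (rule rel_scal_neg[OF False])
  qed
next
  case (FSup x f)
  have pw: "rel p (feval K (\<sigma>(v:=a, x:=w)) f) (feval K (\<sigma>(v:=b, x:=w)) f)" if w: "w \<in> C" for w
  proof (cases "x = v")
    case True then show ?thesis by (simp add: rel_def)
  next
    case False
    then have tw: "\<sigma>(v:=c, x:=w) = \<sigma>(x:=w, v:=c)" for c by (rule_tac ext) auto
    have o: "occ v p f" using FSup.prems(1) False by simp
    have as: "range (\<sigma>(x:=w)) \<subseteq> C" using FSup.prems(2) w by auto
    show ?thesis unfolding tw by (rule FSup.IH[OF o as])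
  qed
  have bA: "\<bar>feval K (\<sigma>(v:=a, x:=w)) f\<bar> \<le> fb f" "\<bar>feval K (\<sigma>(v:=b, x:=w)) f\<bar> \<le> fb f" if "w \<in> C" for w
    using bnd FSup.prems(2) a b that by (auto intro!: bnd)
  show ?case using pw bA unfolding rel_def
    by (auto intro!: SUP_mono_pt[OF Cne, where B="fb f"] simp: split: if_splits)
next
  case (FInf x f)
  have pw: "rel p (feval K (\<sigma>(v:=a, x:=w)) f) (feval K (\<sigma>(v:=b, x:=w)) f)" if w: "w \<in> C" for w
  proof (cases "x = v")
    case True then show ?thesis by (simp add: rel_def)
  next
    case False
    then have tw: "\<sigma>(v:=c, x:=w) = \<sigma>(x:=w, v:=c)" for c by (rule_tac ext) auto
    have o: "occ v p f" using FInf.prems(1) False by simp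
    have as: "range (\<sigma>(x:=w)) \<subseteq> C" using FInf.prems(2) w by auto
    show ?thesis unfolding tw by (rule FInf.IH[OF o as])
  qed
  have bA: "\<bar>feval K (\<sigma>(v:=a, x:=w)) f\<bar> \<le> fb f" "\<bar>feval K (\<sigma>(v:=b, x:=w)) f\<bar> \<le> fb f" if "w \<in> C" for w
    using bnd FInf.prems(2) a b that by (auto intro!: bnd)
  show ?case using pw bA unfolding rel_def
    by (auto intro!: INF_mono_pt[OF Cne, where B="fb f"] simp: split: if_splits)
next
  case (FBSup x t f)
  have pw: "rel p (feval K (\<sigma>(v:=a, x:=w)) f) (feval K (\<sigma>(v:=b, x:=w)) f)" if w: "w \<in> C" for w
  proof (cases "x = v")
    case True then show ?thesis by (simp add: rel_def)
  next
    case False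
    then have tw: "\<sigma>(v:=c, x:=w) = \<sigma>(x:=w, v:=c)" for c by (rule_tac ext) auto
    have o: "occ v p f" using FBSup.prems(1) False by simp
    have as: "range (\<sigma>(x:=w)) \<subseteq> C" using FBSup.prems(2) w by auto
    show ?thesis unfolding tw by (rule FBSup.IH[OF o as])
  qed
  have bA: "\<bar>feval K (\<sigma>(v:=a, x:=w)) f\<bar> \<le> fb f" "\<bar>feval K (\<sigma>(v:=b, x:=w)) f\<bar> \<le> fb f" if "w \<in> C" for w
    using bnd FBSup.prems(2) a b that by (auto intro!: bnd)
  show ?case
  proof (cases "t = Var v")
    case True
    have p: "p" using FBSup.prems(1) True by simp
    have e1: "feval K (\<sigma>(v:=a)) (FBSup x t f) = (SUP c\<in>C. feval K (\<sigma>(v:=a, x:=mt K c a)) f)"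
      using True by simp
    have e2: "feval K (\<sigma>(v:=b)) (FBSup x t f) = (SUP c\<in>C. feval K (\<sigma>(v:=b, x:=mt K c b)) f)"
      using True by simp
    have mm: "mt K (mt K c a) b = mt K c a" if "c \<in> C" for c using asc[OF that a b] ab by simp
    show ?thesis unfolding e1 e2 rel_def using p
    proof (simp only: if_True if_False not_True_eq_False not_False_eq_True)
      assume p: "p"
      show "(SUP c\<in>C. feval K (\<sigma>(v:=a, x:=mt K c a)) f) \<le> (SUP c\<in>C. feval K (\<sigma>(v:=b, x:=mt K c b)) f)"
      proof (rule SUP_le_SUP[OF Cne])
        show "\<bar>feval K (\<sigma>(v:=b, x:=mt K c b)) f\<bar> \<le> fb f" if "c \<in> C" for c using bA(2) mtC[OF that b] by blast
        fix c assume c: "c \<in> C"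
        have "feval K (\<sigma>(v:=a, x:=mt K c a)) f \<le> feval K (\<sigma>(v:=b, x:=mt K (mt K c a) b)) f"
          using pw[OF mtC[OF c a]] p unfolding mm[OF c] rel_def by simp
        then show "\<exists>d\<in>C. feval K (\<sigma>(v:=a, x:=mt K c a)) f \<le> feval K (\<sigma>(v:=b, x:=mt K d b)) f"
          using mtC[OF c a] by blast
      qed
    qed
  next
    case False
    then have nv: "v \<notin> tvars t" using FBSup.prems(1) by simp
    define T where "T = teval K \<sigma> t"
    have T: "T \<in> C" unfolding T_def by (rule tC[OF FBSup.prems(2)])
    have ta: "teval K (\<sigma>(v:=c)) t = T" for c unfolding T_def by (rule teval_irr[OF nv])
    show ?thesis using pw bA T mtC unfolding rel_def feval.simps ta
      by (auto intro!: SUP_mono_pt[OF Cne, where B="fb f"] simp: split: if_splits)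
  qed
next
  case (FBInf x t f)
  have pw: "rel p (feval K (\<sigma>(v:=a, x:=w)) f) (feval K (\<sigma>(v:=b, x:=w)) f)" if w: "w \<in> C" for w
  proof (cases "x = v")
    case True then show ?thesis by (simp add: rel_def)
  next
    case False
    then have tw: "\<sigma>(v:=c, x:=w) = \<sigma>(x:=w, v:=c)" for c by (rule_tac ext) auto
    have o: "occ v p f" using FBInf.prems(1) False by simp
    have as: "range (\<sigma>(x:=w)) \<subseteq> C" using FBInf.prems(2) w by auto
    show ?thesis unfolding tw by (rule FBInf.IH[OF o as])
  qed
  have bA: "\<bar>feval K (\<sigma>(v:=a, x:=w)) f\<bar> \<le> fb f" "\<bar>feval K (\<sigma>(v:=b, x:=w)) f\<bar> \<le> fb f" if "w \<in> C" for w
    using bnd FBInf.prems(2) a b that by (auto intro!: bnd)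
  show ?case
  proof (cases "t = Var v")
    case True
    have p: "\<not>p" using FBInf.prems(1) True by simp
    have e1: "feval K (\<sigma>(v:=a)) (FBInf x t f) = (INF c\<in>C. feval K (\<sigma>(v:=a, x:=mt K c a)) f)"
      using True by simp
    have e2: "feval K (\<sigma>(v:=b)) (FBInf x t f) = (INF c\<in>C. feval K (\<sigma>(v:=b, x:=mt K c b)) f)"
      using True by simp
    have mm: "mt K (mt K c a) b = mt K c a" if "c \<in> C" for c using asc[OF that a b] ab by simp
    show ?thesis unfolding e1 e2 rel_def using p
    proof (simp only: if_True if_False not_True_eq_False not_False_eq_True)
      assume p: "\<not> p"
      show "(INF c\<in>C. feval K (\<sigma>(v:=b, x:=mt K c b)) f) \<le> (INF c\<in>C. feval K (\<sigma>(v:=a, x:=mt K c a)) f)"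
      proof (rule INF_le_INF[OF Cne])
        show "\<bar>feval K (\<sigma>(v:=b, x:=mt K c b)) f\<bar> \<le> fb f" if "c \<in> C" for c using bA(2) mtC[OF that b] by blast
        fix c assume c: "c \<in> C"
        have "feval K (\<sigma>(v:=b, x:=mt K (mt K c a) b)) f \<le> feval K (\<sigma>(v:=a, x:=mt K c a)) f"
          using pw[OF mtC[OF c a]] p unfolding mm[OF c] rel_def by simp
        then show "\<exists>d\<in>C. feval K (\<sigma>(v:=b, x:=mt K d b)) f \<le> feval K (\<sigma>(v:=a, x:=mt K c a)) f"
          using mtC[OF c a] by blast
      qed
    qed
  next
    case False
    then have nv: "v \<notin> tvars t" using FBInf.prems(1) by simp
    define T where "T = teval K \<sigma> t"
    have T: "T \<in> C" unfolding T_def by (rule tC[OF FBInf.prems(2)])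
    have ta: "teval K (\<sigma>(v:=c)) t = T" for c unfolding T_def by (rule teval_irr[OF nv])
    show ?thesis using pw bA T mtC unfolding rel_def feval.simps ta
      by (auto intro!: INF_mono_pt[OF Cne, where B="fb f"] simp: split: if_splits)
  qed
qed


end

definition good :: "'a lstr \<Rightarrow> bool" where
  "good K \<longleftrightarrow> metric_lstr K \<and> AA0 K \<and> collection K"

definition EQ :: "'a itself \<Rightarrow> fm \<Rightarrow> fm \<Rightarrow> bool" where
  "EQ T F G \<longleftrightarrow> (\<forall>K::'a lstr. good K \<longrightarrow> mdl.eqv K F G)"

lemma good_mdl: "good K \<Longrightarrow> mdl K" unfolding good_def mdl_def by simp

lemma EQ_refl: "EQ T F F" unfolding EQ_def using mdl.eqv_refl good_mdl by blast
lemma EQ_trans[trans]: "EQ T F G \<Longrightarrow> EQ T G H \<Longrightarrow> EQ T F H"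
  unfolding EQ_def using mdl.eqv_trans good_mdl by blast
lemma EQ_Qu: "EQ T F G \<Longrightarrow> EQ T (Qu b x F) (Qu b x G)"
  unfolding EQ_def using mdl.eqv_Qu good_mdl by blast
lemma EQ_QB: "EQ T F G \<Longrightarrow> EQ T (QB b x t F) (QB b x t G)"
  unfolding EQ_def using mdl.eqv_QB good_mdl by blast
lemma EQ_pre: "EQ T F G \<Longrightarrow> EQ T (pre q F) (pre q G)"
  unfolding EQ_def using mdl.eqv_pre good_mdl by blast

lemma EQ_swap: "s \<noteq> x \<Longrightarrow> s \<notin> tvars t \<Longrightarrow> EQ T (QB b x t (Qu b s R)) (Qu b s (QB b x t R))"
  unfolding EQ_def
proof (intro allI impI)
  fix K :: "'a lstr" assume g: "good K"
  interpret mdl K by (rule good_mdl[OF g])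
  assume "s \<noteq> x" "s \<notin> tvars t"
  then show "eqv (QB b x t (Qu b s R)) (Qu b s (QB b x t R))"
    unfolding eqv_def using swap_sem by blast
qed

lemma EQ_coll: "x \<noteq> s \<Longrightarrow> s' \<notin> fv R \<Longrightarrow> s' \<noteq> x \<Longrightarrow> s' \<noteq> s \<Longrightarrow> s' \<notin> tvars t \<Longrightarrow>
   EQ T (QB b x t (Qu (\<not>b) s R)) (Qu (\<not>b) s' (QB b x t (QB (\<not>b) s (Var s') R)))"
  unfolding EQ_def
proof (intro allI impI)
  fix K :: "'a lstr" assume g: "good K"
  interpret mdl K by (rule good_mdl[OF g])
  assume "x \<noteq> s" "s' \<notin> fv R" "s' \<noteq> x" "s' \<noteq> s" "s' \<notin> tvars t"
  then show "eqv (QB b x t (Qu (\<not>b) s R)) (Qu (\<not>b) s' (QB b x t (QB (\<not>b) s (Var s') R)))"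
    unfolding eqv_def using coll_sem g unfolding good_def by blast
qed

definition PB_res :: "'a itself \<Rightarrow> nat set \<Rightarrow> fm \<Rightarrow> (bool \<times> nat) list \<Rightarrow> fm \<Rightarrow> bool" where
  "PB_res T A F q' \<theta>' \<longleftrightarrow> sigma0 \<theta>' \<and> distinct (map snd q') \<and> set (map snd q') \<inter> A = {} \<and>
     (\<forall>p\<in>set q'. occ (snd p) (fst p) \<theta>') \<and> fv (pre q' \<theta>') \<subseteq> fv F \<and>
     (\<forall>v\<in>A. \<forall>p. occ v p F \<longrightarrow> occ v p \<theta>') \<and> EQ T F (pre q' \<theta>')"

lemma pushB:
  "length q = n \<Longrightarrow> finite A \<Longrightarrow> sigma0 \<theta> \<Longrightarrow> x \<notin> tvars t \<Longrightarrow> x \<notin> set (map snd q) \<Longrightarrow>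
   set (map snd q) \<inter> tvars t = {} \<Longrightarrow> set (map snd q) \<inter> A = {} \<Longrightarrow> distinct (map snd q) \<Longrightarrow>
   (\<forall>p\<in>set q. occ (snd p) (fst p) \<theta>) \<Longrightarrow>
   \<exists>q' \<theta>'. length q' = length q \<and> PB_res T A (QB b x t (pre q \<theta>)) q' \<theta>'"
proof (induction n arbitrary: q b x t \<theta> A rule: less_induct)
  case (less n)
  show ?case
  proof (cases q)
    case Nil
    show ?thesis
    proof (intro exI conjI)
      show "length [] = length q" using Nil by simp
      show "PB_res T A (QB b x t (pre q \<theta>)) [] (QB b x t \<theta>)"
        using less.prems Nil unfolding PB_res_def by (auto intro: EQ_refl)
    qed
  next
    case (Cons p r)
    obtain c s where p: "p = (c, s)" by (cases p)
    have lr: "length r < n" using less.prems(1) Cons by simp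
    have sr: "s \<notin> set (map snd r)" using less.prems(8) Cons p by simp
    have sx: "s \<noteq> x" using less.prems(5) Cons p by auto
    have st: "s \<notin> tvars t" using less.prems(6) Cons p by auto
    have sA: "s \<notin> A" using less.prems(7) Cons p by auto
    have occs: "occ s c \<theta>" using less.prems(9) Cons p by auto
    have qe: "pre q \<theta> = Qu c s (pre r \<theta>)" using Cons p by simp
    show ?thesis
    proof (cases "c = b")
      case True
      have "\<exists>q' \<theta>'. length q' = length r \<and> PB_res T (A \<union> {s}) (QB b x t (pre r \<theta>)) q' \<theta>'"
        by (rule less.IH[OF lr refl]) (use less.prems Cons p sr in auto)
      then obtain r' \<theta>' where r': "length r' = length r" "PB_res T (A \<union> {s}) (QB b x t (pre r \<theta>)) r' \<theta>'"
        by blast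
      have o1: "occ s b (QB b x t (pre r \<theta>))" using st sx occs True by (auto intro: occ_pre)
      have "EQ T (QB b x t (pre q \<theta>)) (Qu b s (QB b x t (pre r \<theta>)))"
        unfolding qe True by (rule EQ_swap[OF sx st])
      also have "EQ T \<dots> (Qu b s (pre r' \<theta>'))"
        by (rule EQ_Qu) (use r'(2) in \<open>simp add: PB_res_def\<close>)
      finally have eq: "EQ T (QB b x t (pre q \<theta>)) (pre ((b, s) # r') \<theta>')" by simp
      show ?thesis
      proof (intro exI conjI)
        show "length ((b, s) # r') = length q" using r'(1) Cons by simp
        show "PB_res T A (QB b x t (pre q \<theta>)) ((b, s) # r') \<theta>'"
          unfolding PB_res_def
        proof (intro conjI)
          show "sigma0 \<theta>'" using r'(2) by (simp add: PB_res_def)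
          show "distinct (map snd ((b, s) # r'))" using r'(2) by (auto simp: PB_res_def)
          show "set (map snd ((b, s) # r')) \<inter> A = {}" using r'(2) sA by (auto simp: PB_res_def)
          show "\<forall>p\<in>set ((b, s) # r'). occ (snd p) (fst p) \<theta>'" using r'(2) o1 by (auto simp: PB_res_def)
          show "fv (pre ((b, s) # r') \<theta>') \<subseteq> fv (QB b x t (pre q \<theta>))"
            using r'(2) unfolding PB_res_def qe by (auto simp: fv_pre)
          show "\<forall>v\<in>A. \<forall>pa. occ v pa (QB b x t (pre q \<theta>)) \<longrightarrow> occ v pa \<theta>'"
          proof (intro ballI allI impI)
            fix v pa assume v: "v \<in> A" and o: "occ v pa (QB b x t (pre q \<theta>))"
            have "v \<noteq> s" using v sA by auto
            then have "occ v pa (QB b x t (pre r \<theta>))" using o unfolding qe by simp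
            then show "occ v pa \<theta>'" using r'(2) v unfolding PB_res_def by blast
          qed
          show "EQ T (QB b x t (pre q \<theta>)) (pre ((b, s) # r') \<theta>')" by (rule eq)
        qed
      qed
    next
      case False
      then have cb: "c = (\<not> b)" by auto
      have "finite (A \<union> {x, s} \<union> tvars t \<union> set (map snd r) \<union> fv (pre r \<theta>))"
        using less.prems(2) by (simp add: tvars_fin fv_fin)
      from fresh_ex[OF this] obtain s' where s': "s' \<notin> A \<union> {x, s} \<union> tvars t \<union> set (map snd r) \<union> fv (pre r \<theta>)" ..
      define A1 where "A1 = A \<union> {s', x} \<union> tvars t"
      have "\<exists>q' \<theta>'. length q' = length r \<and> PB_res T A1 (QB (\<not>b) s (Var s') (pre r \<theta>)) q' \<theta>'"
        by (rule less.IH[OF lr refl]) (use less.prems Cons p sr s' sx st in \<open>auto simp: A1_def tvars_fin\<close>)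
      then obtain r1 \<theta>1 where r1: "length r1 = length r" "PB_res T A1 (QB (\<not>b) s (Var s') (pre r \<theta>)) r1 \<theta>1"
        by blast
      have lr1: "length r1 < n" using lr r1(1) by simp
      have "\<exists>q' \<theta>'. length q' = length r1 \<and> PB_res T (A \<union> {s'}) (QB b x t (pre r1 \<theta>1)) q' \<theta>'"
        by (rule less.IH[OF lr1 refl]) (use less.prems r1(2) in \<open>auto simp: A1_def PB_res_def\<close>)
      then obtain r2 \<theta>2 where r2: "length r2 = length r1" "PB_res T (A \<union> {s'}) (QB b x t (pre r1 \<theta>1)) r2 \<theta>2"
        by blast
      have "EQ T (QB b x t (pre q \<theta>)) (Qu (\<not>b) s' (QB b x t (QB (\<not>b) s (Var s') (pre r \<theta>))))"
        unfolding qe cb by (rule EQ_coll) (use sx s' in auto)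
      also have "EQ T \<dots> (Qu (\<not>b) s' (QB b x t (pre r1 \<theta>1)))"
        by (intro EQ_Qu EQ_QB) (use r1(2) in \<open>simp add: PB_res_def\<close>)
      also have "EQ T \<dots> (Qu (\<not>b) s' (pre r2 \<theta>2))"
        by (intro EQ_Qu) (use r2(2) in \<open>simp add: PB_res_def\<close>)
      finally have eq: "EQ T (QB b x t (pre q \<theta>)) (pre ((\<not>b, s') # r2) \<theta>2)" by simp
      have o1: "occ s' (\<not>b) \<theta>1"
      proof -
        have "occ s' (\<not>b) (QB (\<not>b) s (Var s') (pre r \<theta>))" using s' by (auto intro: occ_fresh)
        then show ?thesis using r1(2) unfolding PB_res_def A1_def by blast
      qed
      have o2: "occ s' (\<not>b) \<theta>2"
      proof -
        have "s' \<notin> set (map snd r1)" using r1(2) unfolding PB_res_def A1_def by auto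
        then have "occ s' (\<not>b) (QB b x t (pre r1 \<theta>1))" using s' o1 by (auto intro: occ_pre)
        then show ?thesis using r2(2) unfolding PB_res_def by blast
      qed
      show ?thesis
      proof (intro exI conjI)
        show "length ((\<not>b, s') # r2) = length q" using r2(1) r1(1) Cons by simp
        show "PB_res T A (QB b x t (pre q \<theta>)) ((\<not>b, s') # r2) \<theta>2"
          unfolding PB_res_def
        proof (intro conjI)
          show "sigma0 \<theta>2" using r2(2) by (simp add: PB_res_def)
          show "distinct (map snd ((\<not>b, s') # r2))" using r2(2) by (auto simp: PB_res_def)
          show "set (map snd ((\<not>b, s') # r2)) \<inter> A = {}" using r2(2) s' by (auto simp: PB_res_def)
          show "\<forall>p\<in>set ((\<not>b, s') # r2). occ (snd p) (fst p) \<theta>2" using r2(2) o2 by (auto simp: PB_res_def)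
          have F2: "fv (pre r2 \<theta>2) \<subseteq> tvars t \<union> (fv (pre r1 \<theta>1) - {x})" using r2(2) unfolding PB_res_def by simp
          have F1: "fv (pre r1 \<theta>1) \<subseteq> {s'} \<union> (fv (pre r \<theta>) - {s})" using r1(2) unfolding PB_res_def by simp
          have "fv (pre r2 \<theta>2) - {s'} \<subseteq> tvars t \<union> ((fv (pre r \<theta>) - {s}) - {x})" using F1 F2 s' by blast
          then show "fv (pre ((\<not>b, s') # r2) \<theta>2) \<subseteq> fv (QB b x t (pre q \<theta>))"
            unfolding qe by simp
          show "\<forall>v\<in>A. \<forall>pa. occ v pa (QB b x t (pre q \<theta>)) \<longrightarrow> occ v pa \<theta>2"
          proof (intro ballI allI impI)
            fix v pa assume v: "v \<in> A" and o: "occ v pa (QB b x t (pre q \<theta>))"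
            have vs: "v \<noteq> s" "v \<noteq> s'" using v sA s' by auto
            have "v \<in> A1" using v by (simp add: A1_def)
            have o3: "occ v pa (pre r \<theta>) \<or> x = v" using o vs unfolding qe by auto
            have o4: "occ v pa \<theta>1" if "x \<noteq> v"
            proof -
              have "occ v pa (QB (\<not>b) s (Var s') (pre r \<theta>))" using o3 that vs by auto
              then show ?thesis using r1(2) \<open>v \<in> A1\<close> unfolding PB_res_def by blast
            qed
            have vr1: "v \<notin> set (map snd r1)" using r1(2) \<open>v \<in> A1\<close> unfolding PB_res_def by auto
            have "occ v pa (QB b x t (pre r1 \<theta>1))"
            proof (cases "x = v")
              case True then show ?thesis using less.prems(4) by auto
            next
              case False then show ?thesis using o o4 by (auto intro: occ_pre)
            qed
            then show "occ v pa \<theta>2" using r2(2) v unfolding PB_res_def by blast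
          qed
          show "EQ T (QB b x t (pre q \<theta>)) (pre ((\<not>b, s') # r2) \<theta>2)" by (rule eq)
        qed
      qed
    qed
  qed
qed

lemma EQ_sym: "EQ T F G \<Longrightarrow> EQ T G F"
  unfolding EQ_def using mdl.eqv_sym good_mdl by blast

lemma EQ_I: "(\<And>K::'a lstr. good K \<Longrightarrow> mdl.eqv K F G) \<Longrightarrow> EQ TYPE('a) F G"
  unfolding EQ_def by blast

lemma EQ_U: "s \<noteq> x \<Longrightarrow> s \<notin> fv F \<Longrightarrow> EQ TYPE('a) (Qu b x F) (Qu b s (QB b x (Var s) F))"
proof (rule EQ_I)
  fix K :: "'a lstr" assume g: "good K"
  interpret mdl K by (rule good_mdl[OF g])
  assume "s \<noteq> x" "s \<notin> fv F"
  then show "eqv (Qu b x F) (Qu b s (QB b x (Var s) F))" unfolding eqv_def using U_sem by blast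
qed

lemma EQ_W: "w \<notin> tvars t \<Longrightarrow> w \<noteq> x \<Longrightarrow> w \<notin> fv F \<Longrightarrow> EQ TYPE('a) (QB b x t F) (QB b w t (QB b x (Var w) F))"
proof (rule EQ_I)
  fix K :: "'a lstr" assume g: "good K"
  interpret mdl K by (rule good_mdl[OF g])
  assume "w \<notin> tvars t" "w \<noteq> x" "w \<notin> fv F"
  then show "eqv (QB b x t F) (QB b w t (QB b x (Var w) F))" unfolding eqv_def using W_sem by blast
qed

lemma EQ_add_pre_l: "set (map snd q) \<inter> fv H = {} \<Longrightarrow> EQ TYPE('a) (FAdd (pre q F) H) (pre q (FAdd F H))"
proof (rule EQ_I)
  fix K :: "'a lstr" assume g: "good K"
  interpret mdl K by (rule good_mdl[OF g])
  assume "set (map snd q) \<inter> fv H = {}"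
  then show "eqv (FAdd (pre q F) H) (pre q (FAdd F H))" by (rule add_pre_l)
qed

lemma EQ_add_pre_r: "set (map snd q) \<inter> fv H = {} \<Longrightarrow> EQ TYPE('a) (FAdd H (pre q F)) (pre q (FAdd H F))"
proof (rule EQ_I)
  fix K :: "'a lstr" assume g: "good K"
  interpret mdl K by (rule good_mdl[OF g])
  assume "set (map snd q) \<inter> fv H = {}"
  then show "eqv (FAdd H (pre q F)) (pre q (FAdd H F))" by (rule add_pre_r)
qed

lemma EQ_scal_pre: "EQ TYPE('a) (FScal r (pre q F)) (pre (if r \<ge> 0 then q else dualq q) (FScal r F))"
proof (rule EQ_I)
  fix K :: "'a lstr" assume g: "good K"
  interpret mdl K by (rule good_mdl[OF g])
  show "eqv (FScal r (pre q F)) (pre (if r \<ge> 0 then q else dualq q) (FScal r F))" by (rule scal_pre)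
qed

lemma EQ_FAdd: "EQ T F F' \<Longrightarrow> EQ T G G' \<Longrightarrow> EQ T (FAdd F G) (FAdd F' G')"
  unfolding EQ_def mdl.eqv_def[OF good_mdl] by (simp add: mdl.eqv_def[OF good_mdl])

lemma EQ_FScal: "EQ T F F' \<Longrightarrow> EQ T (FScal r F) (FScal r F')"
  unfolding EQ_def by (simp add: mdl.eqv_def[OF good_mdl])

definition NF :: "'a itself \<Rightarrow> nat set \<Rightarrow> fm \<Rightarrow> (bool \<times> nat) list \<Rightarrow> fm \<Rightarrow> bool" where
  "NF T A \<phi> q \<theta> \<longleftrightarrow> sigma0 \<theta> \<and> distinct (map snd q) \<and> set (map snd q) \<inter> A = {} \<and>
     fv (pre q \<theta>) \<subseteq> fv \<phi> \<and> (\<forall>p\<in>set q. occ (snd p) (fst p) \<theta>) \<and> EQ T \<phi> (pre q \<theta>)"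

lemma nf_Qu:
  assumes IH: "\<And>A. finite A \<Longrightarrow> \<exists>q \<theta>. NF TYPE('a) A f q \<theta>" and A: "finite A"
  shows "\<exists>q \<theta>. NF TYPE('a) A (Qu b x f) q \<theta>"
proof -
  obtain q \<theta> where nf: "NF TYPE('a) (A \<union> {x}) f q \<theta>" using IH[of "A \<union> {x}"] A by auto
  have "finite (A \<union> {x} \<union> set (map snd q) \<union> fv \<theta> \<union> fv f)" using A by (simp add: fv_fin)
  from fresh_ex[OF this] obtain s0 where s0: "s0 \<notin> A \<union> {x} \<union> set (map snd q) \<union> fv \<theta> \<union> fv f" ..
  have s0f: "s0 \<notin> fv (pre q \<theta>)" using s0 by (simp add: fv_pre)
  have "\<exists>q' \<theta>'. length q' = length q \<and> PB_res TYPE('a) (A \<union> {s0}) (QB b x (Var s0) (pre q \<theta>)) q' \<theta>'"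
    by (rule pushB[OF refl]) (use A nf s0 in \<open>auto simp: NF_def\<close>)
  then obtain q' \<theta>' where pb: "PB_res TYPE('a) (A \<union> {s0}) (QB b x (Var s0) (pre q \<theta>)) q' \<theta>'" by blast
  have o: "occ s0 b \<theta>'"
  proof -
    have "occ s0 b (QB b x (Var s0) (pre q \<theta>))" using s0f by (simp add: occ_fresh)
    then show ?thesis using pb unfolding PB_res_def by blast
  qed
  have "EQ TYPE('a) (Qu b x f) (Qu b x (pre q \<theta>))" by (rule EQ_Qu) (use nf in \<open>simp add: NF_def\<close>)
  also have "EQ TYPE('a) \<dots> (Qu b s0 (QB b x (Var s0) (pre q \<theta>)))" by (rule EQ_U) (use s0 s0f in auto)
  also have "EQ TYPE('a) \<dots> (Qu b s0 (pre q' \<theta>'))" by (rule EQ_Qu) (use pb in \<open>simp add: PB_res_def\<close>)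
  finally have eq: "EQ TYPE('a) (Qu b x f) (pre ((b, s0) # q') \<theta>')" by simp
  have F1: "fv (pre q' \<theta>') \<subseteq> {s0} \<union> (fv (pre q \<theta>) - {x})" using pb unfolding PB_res_def by simp
  have F0: "fv (pre q \<theta>) \<subseteq> fv f" using nf unfolding NF_def by simp
  show ?thesis
  proof (intro exI)
    show "NF TYPE('a) A (Qu b x f) ((b, s0) # q') \<theta>'"
      unfolding NF_def
    proof (intro conjI)
      show "sigma0 \<theta>'" using pb by (simp add: PB_res_def)
      show "distinct (map snd ((b, s0) # q'))" using pb by (auto simp: PB_res_def)
      show "set (map snd ((b, s0) # q')) \<inter> A = {}" using pb s0 by (auto simp: PB_res_def)
      show "fv (pre ((b, s0) # q') \<theta>') \<subseteq> fv (Qu b x f)" using F1 F0 by auto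
      show "\<forall>p\<in>set ((b, s0) # q'). occ (snd p) (fst p) \<theta>'" using pb o by (auto simp: PB_res_def)
      show "EQ TYPE('a) (Qu b x f) (pre ((b, s0) # q') \<theta>')" by (rule eq)
    qed
  qed
qed

lemma nf_QB:
  assumes IH: "\<And>A. finite A \<Longrightarrow> \<exists>q \<theta>. NF TYPE('a) A f q \<theta>" and A: "finite A"
  shows "\<exists>q \<theta>. NF TYPE('a) A (QB b x t f) q \<theta>"
proof -
  have "finite (A \<union> tvars t \<union> {x} \<union> fv f)" using A by (simp add: fv_fin tvars_fin)
  from fresh_ex[OF this] obtain w where w: "w \<notin> A \<union> tvars t \<union> {x} \<union> fv f" ..
  obtain q \<theta> where nf: "NF TYPE('a) (A \<union> {x, w} \<union> tvars t) f q \<theta>"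
    using IH[of "A \<union> {x, w} \<union> tvars t"] A by (auto simp: tvars_fin)
  have F0: "fv (pre q \<theta>) \<subseteq> fv f" using nf unfolding NF_def by simp
  have wf: "w \<notin> fv (pre q \<theta>)" using w F0 by auto
  have "\<exists>q' \<theta>'. length q' = length q \<and> PB_res TYPE('a) (A \<union> {w} \<union> tvars t) (QB b x (Var w) (pre q \<theta>)) q' \<theta>'"
    by (rule pushB[OF refl]) (use A nf w in \<open>auto simp: NF_def tvars_fin\<close>)
  then obtain q1 \<theta>1 where pb1: "PB_res TYPE('a) (A \<union> {w} \<union> tvars t) (QB b x (Var w) (pre q \<theta>)) q1 \<theta>1" by blast
  have "\<exists>q' \<theta>'. length q' = length q1 \<and> PB_res TYPE('a) A (QB b w t (pre q1 \<theta>1)) q' \<theta>'"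
    by (rule pushB[OF refl]) (use A pb1 w in \<open>auto simp: PB_res_def\<close>)
  then obtain q2 \<theta>2 where pb2: "PB_res TYPE('a) A (QB b w t (pre q1 \<theta>1)) q2 \<theta>2" by blast
  have "EQ TYPE('a) (QB b x t f) (QB b x t (pre q \<theta>))" by (rule EQ_QB) (use nf in \<open>simp add: NF_def\<close>)
  also have "EQ TYPE('a) \<dots> (QB b w t (QB b x (Var w) (pre q \<theta>)))" by (rule EQ_W) (use w wf in auto)
  also have "EQ TYPE('a) \<dots> (QB b w t (pre q1 \<theta>1))" by (rule EQ_QB) (use pb1 in \<open>simp add: PB_res_def\<close>)
  also have "EQ TYPE('a) \<dots> (pre q2 \<theta>2)" using pb2 by (simp add: PB_res_def)
  finally have eq: "EQ TYPE('a) (QB b x t f) (pre q2 \<theta>2)" .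
  have F2: "fv (pre q2 \<theta>2) \<subseteq> tvars t \<union> (fv (pre q1 \<theta>1) - {w})" using pb2 unfolding PB_res_def by simp
  have F1: "fv (pre q1 \<theta>1) \<subseteq> {w} \<union> (fv (pre q \<theta>) - {x})" using pb1 unfolding PB_res_def by simp
  show ?thesis
  proof (intro exI)
    show "NF TYPE('a) A (QB b x t f) q2 \<theta>2"
      unfolding NF_def using pb2 eq F2 F1 F0 unfolding PB_res_def by auto
  qed
qed

lemma nf: "finite A \<Longrightarrow> \<exists>q \<theta>. NF TYPE('a) A \<phi> q \<theta>"
proof (induction \<phi> arbitrary: A)
  case FOne then show ?case by (intro exI[of _ "[]"] exI[of _ FOne]) (simp add: NF_def EQ_refl)
next
  case (FDist s t) then show ?case
    by (intro exI[of _ "[]"] exI[of _ "FDist s t"]) (simp add: NF_def EQ_refl)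
next
  case (FAdd f g)
  obtain q1 \<theta>1 where n1: "NF TYPE('a) (A \<union> fv g) f q1 \<theta>1" using FAdd.IH(1)[of "A \<union> fv g"] FAdd.prems by (auto simp: fv_fin)
  obtain q2 \<theta>2 where n2: "NF TYPE('a) (A \<union> fv f \<union> set (map snd q1)) g q2 \<theta>2"
    using FAdd.IH(2)[of "A \<union> fv f \<union> set (map snd q1)"] FAdd.prems by (auto simp: fv_fin)
  have f1: "fv \<theta>1 \<subseteq> fv f \<union> set (map snd q1)" using n1 unfolding NF_def by (auto simp: fv_pre)
  have f2: "fv \<theta>2 \<subseteq> fv g \<union> set (map snd q2)" using n2 unfolding NF_def by (auto simp: fv_pre)
  have d1: "set (map snd q1) \<inter> fv g = {}" using n1 unfolding NF_def by auto
  have d2: "set (map snd q2) \<inter> (fv f \<union> set (map snd q1)) = {}" using n2 unfolding NF_def by auto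
  have "EQ TYPE('a) (FAdd f g) (FAdd (pre q1 \<theta>1) (pre q2 \<theta>2))"
    by (rule EQ_FAdd) (use n1 n2 in \<open>simp_all add: NF_def\<close>)
  also have "EQ TYPE('a) \<dots> (pre q1 (FAdd \<theta>1 (pre q2 \<theta>2)))"
    by (rule EQ_add_pre_l) (use d1 n2 in \<open>auto simp: NF_def\<close>)
  also have "EQ TYPE('a) \<dots> (pre q1 (pre q2 (FAdd \<theta>1 \<theta>2)))"
    by (rule EQ_pre, rule EQ_add_pre_r) (use d2 f1 in auto)
  finally have eq: "EQ TYPE('a) (FAdd f g) (pre (q1 @ q2) (FAdd \<theta>1 \<theta>2))" by (simp add: pre_append)
  show ?case
  proof (intro exI)
    show "NF TYPE('a) A (FAdd f g) (q1 @ q2) (FAdd \<theta>1 \<theta>2)"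
      unfolding NF_def
    proof (intro conjI)
      show "sigma0 (FAdd \<theta>1 \<theta>2)" using n1 n2 by (simp add: NF_def)
      show "distinct (map snd (q1 @ q2))" using n1 n2 d2 by (auto simp: NF_def)
      show "set (map snd (q1 @ q2)) \<inter> A = {}" using n1 n2 by (auto simp: NF_def)
      show "fv (pre (q1 @ q2) (FAdd \<theta>1 \<theta>2)) \<subseteq> fv (FAdd f g)"
        using n1 n2 unfolding NF_def by (auto simp: fv_pre)
      show "\<forall>p\<in>set (q1 @ q2). occ (snd p) (fst p) (FAdd \<theta>1 \<theta>2)"
      proof
        fix p assume p: "p \<in> set (q1 @ q2)"
        show "occ (snd p) (fst p) (FAdd \<theta>1 \<theta>2)"
        proof (cases "p \<in> set q1")
          case True
          then have "snd p \<notin> fv \<theta>2" using f2 d1 d2 by fastforce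
          then show ?thesis using True n1 by (auto simp: NF_def intro: occ_fresh)
        next
          case False
          then have p2: "p \<in> set q2" using p by simp
          then have "snd p \<notin> fv \<theta>1" using f1 d2 by fastforce
          then show ?thesis using p2 n2 by (auto simp: NF_def intro: occ_fresh)
        qed
      qed
      show "EQ TYPE('a) (FAdd f g) (pre (q1 @ q2) (FAdd \<theta>1 \<theta>2))" by (rule eq)
    qed
  qed
next
  case (FScal r f)
  obtain q \<theta> where n: "NF TYPE('a) A f q \<theta>" using FScal by blast
  have "EQ TYPE('a) (FScal r f) (FScal r (pre q \<theta>))" by (rule EQ_FScal) (use n in \<open>simp add: NF_def\<close>)
  also have "EQ TYPE('a) \<dots> (pre (if r \<ge> 0 then q else dualq q) (FScal r \<theta>))" by (rule EQ_scal_pre)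
  finally have eq: "EQ TYPE('a) (FScal r f) (pre (if r \<ge> 0 then q else dualq q) (FScal r \<theta>))" .
  have ms: "map snd (dualq q) = map snd q" by (simp add: dualq_def)
  show ?case
  proof (intro exI)
    show "NF TYPE('a) A (FScal r f) (if r \<ge> 0 then q else dualq q) (FScal r \<theta>)"
    proof (cases "r \<ge> 0")
      case True then show ?thesis using n eq unfolding NF_def by (auto simp: fv_pre)
    next
      case False
      have o: "\<forall>p\<in>set (dualq q). occ (snd p) (fst p) (FScal r \<theta>)"
        using n False unfolding NF_def dualq_def by auto
      have fvd: "fv (pre (dualq q) \<theta>) = fv (pre q \<theta>)" by (simp add: fv_pre ms)
      show ?thesis using False n eq o ms fvd unfolding NF_def by (simp add: fv_pre)
    qed
  qed
next
  case (FSup x f) then show ?case using nf_Qu[OF FSup.IH FSup.prems, of True x] by (simp add: Qu_def)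
next
  case (FInf x f) then show ?case using nf_Qu[OF FInf.IH FInf.prems, of False x] by (simp add: Qu_def)
next
  case (FBSup x t f) then show ?case using nf_QB[OF FBSup.IH FBSup.prems, of True x t] by (simp add: QB_def)
next
  case (FBInf x t f) then show ?case using nf_QB[OF FBInf.IH FBInf.prems, of False x t] by (simp add: QB_def)
qed

lemma final_cmp:
  assumes mM: "mdl M" and mN: "mdl N" and cof: "cofinal_ext M N" and s0: "sigma0_elem M N"
  shows "sigma0 \<theta> \<Longrightarrow> distinct (map snd q) \<Longrightarrow> (\<forall>p\<in>set q. occ (snd p) (fst p) \<theta>) \<Longrightarrow>
    range \<sigma> \<subseteq> carrier M \<Longrightarrow> feval M \<sigma> (pre q \<theta>) = feval N \<sigma> (pre q \<theta>)"
proof (induction q arbitrary: \<sigma>)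
  case Nil then show ?case using s0 unfolding sigma0_elem_def by simp
next
  case (Cons p r)
  obtain c s where p: "p = (c, s)" by (cases p)
  have sub: "carrier M \<subseteq> carrier N" using cof unfolding cofinal_ext_def substructure_def by blast
  have cf: "\<And>a. a \<in> carrier N \<Longrightarrow> \<exists>b\<in>carrier M. mt N a b = a"
    using cof unfolding cofinal_ext_def leq_def by blast
  have \<sigma>N: "range \<sigma> \<subseteq> carrier N" using Cons.prems(4) sub by blast
  have IH: "feval M (\<sigma>(s:=a)) (pre r \<theta>) = feval N (\<sigma>(s:=a)) (pre r \<theta>)" if "a \<in> carrier M" for a
    by (rule Cons.IH) (use Cons.prems that in auto)
  have oc: "occ s c (pre r \<theta>)" using Cons.prems(3) p by (auto intro: occ_pre)
  define h where "h a = feval N (\<sigma>(s:=a)) (pre r \<theta>)" for a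
  have mono: "rel c (h a) (h b)" if "a \<in> carrier N" "b \<in> carrier N" "mt N a b = a" for a b
    unfolding h_def by (rule mdl.mono_occ[OF mN that oc \<sigma>N])
  have bdN: "\<bar>h a\<bar> \<le> fb (pre r \<theta>)" if "a \<in> carrier N" for a
    unfolding h_def by (rule mdl.bnd[OF mN]) (use \<sigma>N that in auto)
  have Mne: "carrier M \<noteq> {}" by (rule mdl.Cne[OF mM])
  have Nne: "carrier N \<noteq> {}" by (rule mdl.Cne[OF mN])
  have eM: "feval M \<sigma> (pre (p # r) \<theta>) = (if c then (SUP a\<in>carrier M. h a) else (INF a\<in>carrier M. h a))"
    using IH p unfolding h_def by (simp add: Qu_def cong: SUP_cong INF_cong)
  have eN: "feval N \<sigma> (pre (p # r) \<theta>) = (if c then (SUP a\<in>carrier N. h a) else (INF a\<in>carrier N. h a))"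
    using p unfolding h_def by (simp add: Qu_def)
  show ?case
  proof (cases c)
    case True
    have "(SUP a\<in>carrier M. h a) = (SUP a\<in>carrier N. h a)"
    proof (rule antisym)
      show "(SUP a\<in>carrier M. h a) \<le> (SUP a\<in>carrier N. h a)"
        by (rule SUP_le_SUP[OF Mne bdN]) (use sub in blast)+
      show "(SUP a\<in>carrier N. h a) \<le> (SUP a\<in>carrier M. h a)"
      proof (rule SUP_le_SUP[OF Nne])
        show "\<bar>h b\<bar> \<le> fb (pre r \<theta>)" if "b \<in> carrier M" for b using bdN sub that by blast
        fix a assume a: "a \<in> carrier N"
        obtain b where b: "b \<in> carrier M" "mt N a b = a" using cf[OF a] by blast
        have "h a \<le> h b" using mono[OF a _ b(2)] b(1) sub True by (auto simp: rel_def)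
        then show "\<exists>b\<in>carrier M. h a \<le> h b" using b(1) by blast
      qed
    qed
    then show ?thesis using eM eN True by simp
  next
    case False
    have "(INF a\<in>carrier M. h a) = (INF a\<in>carrier N. h a)"
    proof (rule antisym)
      show "(INF a\<in>carrier N. h a) \<le> (INF a\<in>carrier M. h a)"
        by (rule INF_le_INF[OF Mne bdN]) (use sub in blast)+
      show "(INF a\<in>carrier M. h a) \<le> (INF a\<in>carrier N. h a)"
      proof (rule INF_le_INF[OF Nne])
        show "\<bar>h b\<bar> \<le> fb (pre r \<theta>)" if "b \<in> carrier M" for b using bdN sub that by blast
        fix a assume a: "a \<in> carrier N"
        obtain b where b: "b \<in> carrier M" "mt N a b = a" using cf[OF a] by blast
        have "h b \<le> h a" using mono[OF a _ b(2)] b(1) sub False by (auto simp: rel_def)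
        then show "\<exists>b\<in>carrier M. h b \<le> h a" using b(1) by blast
      qed
    qed
    then show ?thesis using eM eN False by simp
  qed
qed

theorem mainTheorem11:
  fixes M N :: "'a lstr"
  assumes "model_AA0 M" and "model_AA0 N"
    and "cofinal_ext M N"
    and "sigma0_elem M N"
    and "collection M" and "collection N"
  shows "elem M N"
  unfolding elem_def
proof (intro allI impI)
  fix \<phi> and \<sigma> :: "nat \<Rightarrow> 'a" assume \<sigma>: "range \<sigma> \<subseteq> carrier M"
  have gM: "good M" using assms unfolding good_def model_AA0_def by simp
  have gN: "good N" using assms unfolding good_def model_AA0_def by simp
  have sub: "carrier M \<subseteq> carrier N" using assms(3) unfolding cofinal_ext_def substructure_def by blast
  obtain q \<theta> where n: "NF TYPE('a) {} \<phi> q \<theta>" using nf[of "{}" \<phi>] by auto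
  have e: "EQ TYPE('a) \<phi> (pre q \<theta>)" using n by (simp add: NF_def)
  have qM: "mdl.eqv M \<phi> (pre q \<theta>)" using e gM unfolding EQ_def by blast
  have eM: "feval M \<sigma> \<phi> = feval M \<sigma> (pre q \<theta>)"
    using qM[unfolded mdl.eqv_def[OF good_mdl[OF gM]], rule_format, OF \<sigma>] .
  have qN: "mdl.eqv N \<phi> (pre q \<theta>)" using e gN unfolding EQ_def by blast
  have \<sigma>N: "range \<sigma> \<subseteq> carrier N" using \<sigma> sub by (rule order_trans)
  have eN: "feval N \<sigma> \<phi> = feval N \<sigma> (pre q \<theta>)"
    using qN[unfolded mdl.eqv_def[OF good_mdl[OF gN]], rule_format, OF \<sigma>N] .
  have "feval M \<sigma> (pre q \<theta>) = feval N \<sigma> (pre q \<theta>)"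
    by (rule final_cmp[OF good_mdl[OF gM] good_mdl[OF gN] assms(3,4)]) (use n \<sigma> in \<open>auto simp: NF_def\<close>)
  then show "feval M \<sigma> \<phi> = feval N \<sigma> \<phi>" using eM eN by simp
qed

end
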